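(* Let $X$ be a $\mathbb{Z}^n$-periodic discrete metric space, $p\in(1,\infty)$, and let $A\in\mathcal{A}_p(X)$ be $\mathbb{Z}^n$-periodic, i.e. $T_\alpha A=AT_\alpha$ for every $\alpha\in\mathbb{Z}^n$. Then $\mathrm{sp}_{ess}A=\mathrm{sp}\,A$ on $l^p(X)$.
   Context: A discrete metric space is a countable set $X$ with a metric $\rho$ such that every ball is finite. It is $\mathbb{Z}^n$-periodic if $\mathbb{Z}^n$ acts on $X$ by $\rho$-isometries, $(\alpha,x)\mapsto\alpha\cdot x$ (a group action), freely, with finitely many orbits. $(T_\alpha u)(x)=u((-\alpha)\cdot x)$. A band operator on $l^p(X)$ is a linear operator with bounded generating function $k_A$ (i.e. $(Au)(x)=\sum_y k_A(x,y)u(y)$ for finitely supported $u$) vanishing whenever $\rho(x,y)>R$ for some $R$; $\mathcal{A}_p(X)$ is the closure of band operators in $\mathcal{L}(l^p(X))$. $\mathrm{sp}_{ess}A$ is the set of $\lambda$ with $A-\lambda I$ not Fredholm. *)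

theory Defs
  imports "HOL-Analysis.Analysis"
begin

text \<open>The discrete metric space X is the whole (countable) type 'a; elements of
  l^p(X) are functions 'a \<Rightarrow> complex; operators are functions on
  ('a \<Rightarrow> complex), only their behaviour on l^p(X) matters.\<close>

definition discrete_metric_space :: "('a \<Rightarrow> 'a \<Rightarrow> real) \<Rightarrow> bool" where
  "discrete_metric_space \<rho> \<longleftrightarrow>
     countable (UNIV :: 'a set) \<and>
     (\<forall>x y. \<rho> x y = 0 \<longleftrightarrow> x = y) \<and>
     (\<forall>x y. \<rho> x y = \<rho> y x) \<and>
     (\<forall>x y z. \<rho> x z \<le> \<rho> x y + \<rho> y z) \<and>
     (\<forall>x r. finite {y. \<rho> x y \<le> r})"

definition periodic_space ::
  "('a \<Rightarrow> 'a \<Rightarrow> real) \<Rightarrow> (int ^ 'n \<Rightarrow> 'a \<Rightarrow> 'a) \<Rightarrow> bool" where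
  "periodic_space \<rho> act \<longleftrightarrow>
     discrete_metric_space \<rho> \<and>
     (\<forall>x. act 0 x = x) \<and>
     (\<forall>\<alpha> \<beta> x. act (\<alpha> + \<beta>) x = act \<alpha> (act \<beta> x)) \<and>
     (\<forall>\<alpha> x y. \<rho> (act \<alpha> x) (act \<alpha> y) = \<rho> x y) \<and>
     (\<forall>\<alpha> x. act \<alpha> x = x \<longrightarrow> \<alpha> = 0) \<and>
     finite {range (\<lambda>\<alpha>. act \<alpha> x) | x. True}"

definition lp_space :: "real \<Rightarrow> ('a \<Rightarrow> complex) set" where
  "lp_space p = {u. (\<lambda>x. norm (u x) powr p) summable_on UNIV}"

definition lp_norm :: "real \<Rightarrow> ('a \<Rightarrow> complex) \<Rightarrow> real" where
  "lp_norm p u = (infsum (\<lambda>x. norm (u x) powr p) UNIV) powr (1 / p)"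

definition bounded_op :: "real \<Rightarrow> (('a \<Rightarrow> complex) \<Rightarrow> ('a \<Rightarrow> complex)) \<Rightarrow> bool" where
  "bounded_op p A \<longleftrightarrow>
     (\<forall>u \<in> lp_space p. A u \<in> lp_space p) \<and>
     (\<forall>u \<in> lp_space p. \<forall>v \<in> lp_space p. A (\<lambda>x. u x + v x) = (\<lambda>x. A u x + A v x)) \<and>
     (\<forall>u \<in> lp_space p. \<forall>c. A (\<lambda>x. c * u x) = (\<lambda>x. c * A u x)) \<and>
     (\<exists>C. \<forall>u \<in> lp_space p. lp_norm p (A u) \<le> C * lp_norm p u)"

definition op_norm :: "real \<Rightarrow> (('a \<Rightarrow> complex) \<Rightarrow> ('a \<Rightarrow> complex)) \<Rightarrow> real" where
  "op_norm p A = (SUP u \<in> {u \<in> lp_space p. lp_norm p u \<le> 1}. lp_norm p (A u))"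

definition band_op ::
  "real \<Rightarrow> ('a \<Rightarrow> 'a \<Rightarrow> real) \<Rightarrow> (('a \<Rightarrow> complex) \<Rightarrow> ('a \<Rightarrow> complex)) \<Rightarrow> bool" where
  "band_op p \<rho> A \<longleftrightarrow> bounded_op p A \<and>
     (\<exists>k :: 'a \<Rightarrow> 'a \<Rightarrow> complex. \<exists>R M.
        (\<forall>x y. norm (k x y) \<le> M) \<and>
        (\<forall>x y. \<rho> x y > R \<longrightarrow> k x y = 0) \<and>
        (\<forall>u. finite {y. u y \<noteq> 0} \<longrightarrow>
              (\<forall>x. A u x = (\<Sum>y \<in> {y. u y \<noteq> 0}. k x y * u y))))"

definition Ap_class ::
  "real \<Rightarrow> ('a \<Rightarrow> 'a \<Rightarrow> real) \<Rightarrow> (('a \<Rightarrow> complex) \<Rightarrow> ('a \<Rightarrow> complex)) \<Rightarrow> bool" where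
  "Ap_class p \<rho> A \<longleftrightarrow> bounded_op p A \<and>
     (\<forall>\<epsilon>>0. \<exists>B. band_op p \<rho> B \<and> op_norm p (\<lambda>u x. A u x - B u x) < \<epsilon>)"

definition shift :: "(int ^ 'n \<Rightarrow> 'a \<Rightarrow> 'a) \<Rightarrow> int ^ 'n \<Rightarrow> ('a \<Rightarrow> complex) \<Rightarrow> ('a \<Rightarrow> complex)" where
  "shift act \<alpha> u = (\<lambda>x. u (act (- \<alpha>) x))"

definition cspan_fun :: "('a \<Rightarrow> complex) set \<Rightarrow> ('a \<Rightarrow> complex) set" where
  "cspan_fun S = {v. \<exists>F c. finite F \<and> F \<subseteq> S \<and> v = (\<lambda>x. \<Sum>w\<in>F. c w * w x)}"

definition fredholm :: "real \<Rightarrow> (('a \<Rightarrow> complex) \<Rightarrow> ('a \<Rightarrow> complex)) \<Rightarrow> bool" where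
  "fredholm p A \<longleftrightarrow> bounded_op p A \<and>
     \<comment> \<open>finite-dimensional kernel\<close>
     (\<exists>F. finite F \<and> F \<subseteq> lp_space p \<and> {u \<in> lp_space p. A u = (\<lambda>x. 0)} \<subseteq> cspan_fun F) \<and>
     \<comment> \<open>closed range\<close>
     (\<forall>v \<in> lp_space p. (\<forall>\<epsilon>>0. \<exists>u \<in> lp_space p. lp_norm p (\<lambda>x. A u x - v x) < \<epsilon>)
          \<longrightarrow> (\<exists>u \<in> lp_space p. A u = v)) \<and>
     \<comment> \<open>finite codimension of the range\<close>
     (\<exists>F. finite F \<and> F \<subseteq> lp_space p \<and>
          (\<forall>v \<in> lp_space p. \<exists>u \<in> lp_space p. (\<lambda>x. v x - A u x) \<in> cspan_fun F))"

definition invertible_op :: "real \<Rightarrow> (('a \<Rightarrow> complex) \<Rightarrow> ('a \<Rightarrow> complex)) \<Rightarrow> bool" where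
  "invertible_op p A \<longleftrightarrow> bounded_op p A \<and>
     (\<exists>B. bounded_op p B \<and> (\<forall>u \<in> lp_space p. B (A u) = u \<and> A (B u) = u))"

definition spectrum_op :: "real \<Rightarrow> (('a \<Rightarrow> complex) \<Rightarrow> ('a \<Rightarrow> complex)) \<Rightarrow> complex set" where
  "spectrum_op p A = {z. \<not> invertible_op p (\<lambda>u x. A u x - z * u x)}"

definition ess_spectrum_op :: "real \<Rightarrow> (('a \<Rightarrow> complex) \<Rightarrow> ('a \<Rightarrow> complex)) \<Rightarrow> complex set" where
  "ess_spectrum_op p A = {z. \<not> fredholm p (\<lambda>u x. A u x - z * u x)}"

end

theory Submission
  imports Defs
begin

lemma powr_le_self: "0 \<le> (x::real) \<Longrightarrow> x \<le> 1 \<Longrightarrow> 1 \<le> p \<Longrightarrow> x powr p \<le> x"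
  by (metis powr_mono' powr_one)

lemma cvx_pt:
  fixes a b l p :: real
  assumes "1 \<le> p" "0 \<le> a" "0 \<le> b" "0 \<le> l" "l \<le> 1"
  shows "(l*a + (1-l)*b) powr p \<le> l * a powr p + (1-l) * b powr p"
proof (cases "a > 0 \<and> b > 0")
  case True
  have "convex_on {0<..} (\<lambda>x. x powr p)" using powr_convex assms by blast
  from convex_onD[OF this, of "1-l" a b] True assms show ?thesis by (simp add: algebra_simps)
next
  case False
  then have "a = 0 \<or> b = 0" using assms by auto
  then show ?thesis
  proof
    assume a: "a = 0"
    have "((1-l)*b) powr p = (1-l) powr p * b powr p" using assms by (simp add: powr_mult)
    also have "\<dots> \<le> (1-l) * b powr p" using powr_le_self[of "1-l" p] assms
      by (intro mult_right_mono) auto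
    finally show ?thesis using a assms by simp
  next
    assume b: "b = 0"
    have "(l*a) powr p = l powr p * a powr p" using assms by (simp add: powr_mult)
    also have "\<dots> \<le> l * a powr p" using powr_le_self[of "l" p] assms
      by (intro mult_right_mono) auto
    finally show ?thesis using b assms by simp
  qed
qed

locale lpc =
  fixes p :: real
  assumes p1: "1 < p"
begin

abbreviation "X \<equiv> lp_space p"
abbreviation S :: "('a \<Rightarrow> complex) \<Rightarrow> real" where
  "S u \<equiv> infsum (\<lambda>x. norm (u x) powr p) UNIV"
abbreviation N :: "('a \<Rightarrow> complex) \<Rightarrow> real" where
  "N u \<equiv> lp_norm p u"

lemma p0: "0 < p" using p1 by simp

lemma X_iff: "u \<in> X \<longleftrightarrow> (\<lambda>x. norm (u x) powr p) summable_on UNIV"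
  by (simp add: lp_space_def)

lemma S_nonneg: "0 \<le> S u"
  by (intro infsum_nonneg) simp

lemma N_nonneg: "0 \<le> N u"
  by (simp add: lp_norm_def)

lemma N_powr: "N u powr p = S u"
  using p0 S_nonneg[of u] by (simp add: lp_norm_def powr_powr)

lemma N_from_S: "N u = S u powr (1/p)"
  by (simp add: lp_norm_def)

lemma pt_le_S:
  assumes "u \<in> X" shows "norm (u x) powr p \<le> S u"
proof -
  have "infsum (\<lambda>x. norm (u x) powr p) {x} \<le> S u"
    using assms by (intro infsum_mono_neutral) (auto simp: X_iff)
  then show ?thesis by simp
qed

lemma pt_le:
  assumes "u \<in> X" shows "norm (u x) \<le> N u"
proof -
  have "(norm (u x) powr p) powr (1/p) \<le> S u powr (1/p)"
    using pt_le_S[OF assms] p0 by (intro powr_mono2) auto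
  then show ?thesis using p0 by (simp add: powr_powr N_from_S)
qed

lemma N_eq_0D:
  assumes "u \<in> X" "N u = 0" shows "u = (\<lambda>x. 0)"
  using pt_le[OF assms(1)] assms(2) by (auto simp: fun_eq_iff)

lemma S_zero[simp]: "S (\<lambda>x. 0) = 0" using p0 by simp
lemma N_zero[simp]: "N (\<lambda>x. 0) = 0" using p0 by (simp add: lp_norm_def)
lemma X_zero[simp]: "(\<lambda>x. 0) \<in> X" using p0 by (simp add: X_iff)

lemma X_scale:
  assumes "u \<in> X" shows "(\<lambda>x. c * u x) \<in> X"
proof -
  have "(\<lambda>x. norm c powr p * norm (u x) powr p) summable_on UNIV"
    using assms by (intro summable_on_cmult_right) (simp add: X_iff)
  then show ?thesis by (simp add: X_iff norm_mult powr_mult)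
qed

lemma N_scale:
  assumes "u \<in> X" shows "N (\<lambda>x. c * u x) = norm c * N u"
proof -
  have "S (\<lambda>x. c * u x) = infsum (\<lambda>x. norm c powr p * norm (u x) powr p) UNIV"
    by (simp add: norm_mult powr_mult)
  also have "\<dots> = norm c powr p * S u"
    using assms by (intro infsum_cmult_right) (simp add: X_iff)
  finally have "S (\<lambda>x. c * u x) = norm c powr p * S u" .
  then show ?thesis using p0 S_nonneg[of u]
    by (simp add: N_from_S powr_mult powr_powr)
qed

lemma minkowski:
  assumes u: "u \<in> X" and v: "v \<in> X"
  shows "(\<lambda>x. u x + v x) \<in> X \<and> N (\<lambda>x. u x + v x) \<le> N u + N v"
proof (cases "N u = 0 \<or> N v = 0")
  case True
  then show ?thesis
  proof
    assume "N u = 0" then have "u = (\<lambda>x. 0)" using N_eq_0D u by blast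
    then show ?thesis using v by simp
  next
    assume "N v = 0" then have "v = (\<lambda>x. 0)" using N_eq_0D v by blast
    then show ?thesis using u by simp
  qed
next
  case False
  define s where "s = N u"
  define t where "t = N v"
  have s: "s > 0" and t: "t > 0" using False N_nonneg s_def t_def
    by (metis order_le_less)+
  define l where "l = s / (s + t)"
  have l0: "0 \<le> l" "l \<le> 1" using s t by (auto simp: l_def)
  have 1: "1 - l = t / (s+t)" using s t by (simp add: l_def field_simps)
  define g where "g x = (s+t) powr p * (l / s powr p * norm (u x) powr p + (1-l) / t powr p * norm (v x) powr p)" for x
  have pt: "norm (u x + v x) powr p \<le> g x" for x
  proof -
    have "norm (u x + v x) \<le> (s+t) * (l * (norm (u x) / s) + (1-l) * (norm (v x) / t))"
    proof -
      have "(s+t) * (l * (norm (u x) / s) + (1-l) * (norm (v x) / t)) = norm (u x) + norm (v x)"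
      proof -
        have "l * (norm (u x) / s) = norm (u x) / (s+t)" using s by (simp add: l_def)
        moreover have "(1-l) * (norm (v x) / t) = norm (v x) / (s+t)" using t by (simp add: 1)
        ultimately show ?thesis using s t by (simp add: add_divide_distrib[symmetric])
      qed
      then show ?thesis by (simp add: norm_triangle_ineq)
    qed
    then have "norm (u x + v x) powr p \<le> ((s+t) * (l * (norm (u x) / s) + (1-l) * (norm (v x) / t))) powr p"
      using p0 by (intro powr_mono2) auto
    also have "\<dots> = (s+t) powr p * (l * (norm (u x) / s) + (1-l) * (norm (v x) / t)) powr p"
      using s t l0 by (simp add: powr_mult)
    also have "\<dots> \<le> (s+t) powr p * (l * (norm (u x) / s) powr p + (1-l) * (norm (v x) / t) powr p)"
      using s t l0 p1 by (intro mult_left_mono cvx_pt) auto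
    also have "\<dots> = g x" using s t by (simp add: g_def powr_divide)
    finally show ?thesis .
  qed
  have gs: "g summable_on UNIV" unfolding g_def using u v
    by (intro summable_on_cmult_right summable_on_add) (auto simp: X_iff)
  have mem: "(\<lambda>x. u x + v x) \<in> X" unfolding X_iff
    by (rule summable_on_comparison_test[OF gs]) (auto intro: pt)
  have "S (\<lambda>x. u x + v x) \<le> infsum g UNIV"
    using mem gs pt by (intro infsum_mono) (auto simp: X_iff)
  also have "infsum g UNIV = (s+t) powr p * (l / s powr p * S u + (1-l) / t powr p * S v)"
  proof -
    have su: "(\<lambda>x. l / s powr p * norm (u x) powr p) summable_on UNIV"
      using u by (intro summable_on_cmult_right) (simp add: X_iff)
    have sv: "(\<lambda>x. (1-l) / t powr p * norm (v x) powr p) summable_on UNIV"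
      using v by (intro summable_on_cmult_right) (simp add: X_iff)
    have "infsum g UNIV = (s+t) powr p * infsum (\<lambda>x. l / s powr p * norm (u x) powr p + (1-l) / t powr p * norm (v x) powr p) UNIV"
      unfolding g_def by (rule infsum_cmult_right) (use su sv summable_on_add in blast)
    also have "\<dots> = (s+t) powr p * (infsum (\<lambda>x. l / s powr p * norm (u x) powr p) UNIV + infsum (\<lambda>x. (1-l) / t powr p * norm (v x) powr p) UNIV)"
      using su sv by (simp add: infsum_add)
    also have "\<dots> = (s+t) powr p * (l / s powr p * S u + (1-l) / t powr p * S v)"
    proof -
      have e1: "infsum (\<lambda>x. l / s powr p * norm (u x) powr p) UNIV = l / s powr p * S u"
        using u by (intro infsum_cmult_right) (simp add: X_iff)
      have e2: "infsum (\<lambda>x. (1-l) / t powr p * norm (v x) powr p) UNIV = (1-l) / t powr p * S v"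
        using v by (intro infsum_cmult_right) (simp add: X_iff)
      show ?thesis by (simp only: e1 e2)
    qed
    finally show ?thesis .
  qed
  also have "\<dots> = (s+t) powr p"
  proof -
    have "S u = s powr p" "S v = t powr p" using N_powr[of u] N_powr[of v] s_def t_def by auto
    moreover have "s powr p > 0" "t powr p > 0" using s t by auto
    ultimately show ?thesis by simp
  qed
  finally have "S (\<lambda>x. u x + v x) \<le> (s+t) powr p" .
  then have "S (\<lambda>x. u x + v x) powr (1/p) \<le> ((s+t) powr p) powr (1/p)"
    using S_nonneg p0 by (intro powr_mono2) auto
  then have "N (\<lambda>x. u x + v x) \<le> s + t" using s t p0 by (simp add: N_from_S powr_powr)
  then show ?thesis using mem s_def t_def by simp
qed

end

context lpc begin

lemma summable_on_fsum:
  fixes g :: "'j \<Rightarrow> 'a \<Rightarrow> real"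
  assumes "finite J" "\<And>j. j \<in> J \<Longrightarrow> g j summable_on A"
  shows "(\<lambda>x. \<Sum>j\<in>J. g j x) summable_on A"
  using assms by (induction J rule: finite_induct) (auto intro: summable_on_add)

lemma X_add: "u \<in> X \<Longrightarrow> v \<in> X \<Longrightarrow> (\<lambda>x. u x + v x) \<in> X"
  using minkowski by blast
lemma N_add: "u \<in> X \<Longrightarrow> v \<in> X \<Longrightarrow> N (\<lambda>x. u x + v x) \<le> N u + N v"
  using minkowski by blast

lemma X_diff: "u \<in> X \<Longrightarrow> v \<in> X \<Longrightarrow> (\<lambda>x. u x - v x) \<in> X"
  using X_add[of u "\<lambda>x. (-1) * v x"] X_scale[of v "-1"] by simp

lemma N_diff: "u \<in> X \<Longrightarrow> v \<in> X \<Longrightarrow> N (\<lambda>x. u x - v x) \<le> N u + N v"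
  using N_add[of u "\<lambda>x. (-1) * v x"] X_scale[of v "-1"] N_scale[of v "-1"] by simp

lemma N_commute: "N (\<lambda>x. u x - v x) = N (\<lambda>x. v x - u x)"
  by (simp add: lp_norm_def norm_minus_commute)

lemma N_tri: "u \<in> X \<Longrightarrow> v \<in> X \<Longrightarrow> w \<in> X \<Longrightarrow> N (\<lambda>x. u x - w x) \<le> N (\<lambda>x. u x - v x) + N (\<lambda>x. v x - w x)"
  using N_add[OF X_diff X_diff, of u v v w] by simp

lemma X_neg: "u \<in> X \<Longrightarrow> (\<lambda>x. - u x) \<in> X"
  using X_scale[of u "-1"] by simp

lemma X_sum:
  assumes "finite J" "\<And>j. j \<in> J \<Longrightarrow> g j \<in> X"
  shows "(\<lambda>x. \<Sum>j\<in>J. c j * g j x) \<in> X \<and> N (\<lambda>x. \<Sum>j\<in>J. c j * g j x) \<le> (\<Sum>j\<in>J. norm (c j) * N (g j))"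
  using assms
proof (induction J rule: finite_induct)
  case empty
  then show ?case by simp
next
  case (insert j J)
  have a: "(\<lambda>x. c j * g j x) \<in> X" using insert X_scale by auto
  have b: "(\<lambda>x. \<Sum>j\<in>J. c j * g j x) \<in> X" using insert by auto
  have "N (\<lambda>x. c j * g j x + (\<Sum>j\<in>J. c j * g j x)) \<le> N (\<lambda>x. c j * g j x) + N (\<lambda>x. \<Sum>j\<in>J. c j * g j x)"
    using N_add[OF a b] by simp
  also have "\<dots> \<le> norm (c j) * N (g j) + (\<Sum>j\<in>J. norm (c j) * N (g j))"
  proof -
    have "N (\<lambda>x. c j * g j x) = norm (c j) * N (g j)" using N_scale[of "g j" "c j"] insert.prems by simp
    then show ?thesis using insert by simp
  qed
  finally show ?case using insert X_add[OF a b] by simp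
qed

lemma tail_approx:
  assumes w: "w \<in> X" and e: "e > 0"
  shows "\<exists>G. finite G \<and> (\<lambda>x. if x \<in> G then w x else 0) \<in> X \<and>
     N (\<lambda>x. w x - (if x \<in> G then w x else 0)) < e"
proof -
  define f where "f x = norm (w x) powr p" for x
  have fs: "f summable_on UNIV" using w unfolding X_iff f_def .
  have ep: "e powr p > 0" using e by simp
  obtain G where G: "finite G" "dist (sum f G) (infsum f UNIV) \<le> e powr p / 2"
    using infsum_finite_approximation[OF fs, of "e powr p / 2"] ep by auto
  define h where "h x = (if x \<in> G then f x else 0)" for x
  define t where "t x = (if x \<in> G then 0 else f x)" for x
  have hsum: "infsum h UNIV = sum f G"
    using G by (subst infsum_cong_neutral[where T=G and g=f]) (auto simp: h_def)
  have hs: "h summable_on UNIV"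
    using G by (subst summable_on_cong_neutral[where T=G and g=f]) (auto simp: h_def)
  have ts: "t summable_on UNIV"
    using fs by (rule summable_on_comparison_test) (auto simp: t_def f_def)
  have "infsum f UNIV = infsum (\<lambda>x. h x + t x) UNIV"
    by (rule infsum_cong) (simp add: h_def t_def)
  also have "\<dots> = infsum h UNIV + infsum t UNIV" using hs ts by (rule infsum_add)
  finally have tsum: "infsum t UNIV = infsum f UNIV - sum f G" using hsum by simp
  have "sum f G = infsum f G" using G by simp
  also have "\<dots> \<le> infsum f UNIV"
    by (rule infsum_mono_neutral) (use fs G in \<open>auto simp: f_def\<close>)
  finally have "sum f G \<le> infsum f UNIV" .
  then have tle: "infsum t UNIV \<le> e powr p / 2" using G(2) tsum by (simp add: dist_real_def)
  have eqt: "(\<lambda>x. norm (w x - (if x \<in> G then w x else 0)) powr p) = t"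
    using p0 by (auto simp: t_def f_def fun_eq_iff)
  have A: "S (\<lambda>x. w x - (if x \<in> G then w x else 0)) \<le> e powr p / 2"
    using eqt tle by simp
  have "N (\<lambda>x. w x - (if x \<in> G then w x else 0)) \<le> (e powr p / 2) powr (1/p)"
    unfolding N_from_S using powr_mono2[OF _ S_nonneg A, of "1/p"] p0 by simp
  also have "\<dots> < (e powr p) powr (1/p)"
    using ep p0 by (intro powr_less_mono2) auto
  also have "\<dots> = e" using e p0 by (simp add: powr_powr)
  finally have 1: "N (\<lambda>x. w x - (if x \<in> G then w x else 0)) < e" .
  have "(\<lambda>x. if x \<in> G then w x else 0) \<in> X"
    unfolding X_iff by (rule summable_on_comparison_test[OF fs]) (auto simp: f_def)
  with 1 G show ?thesis by blast
qed

lemma S_disjoint_sum: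
  assumes J: "finite J" and g: "\<And>j. j \<in> J \<Longrightarrow> g j \<in> X"
    and disj: "\<And>x i j. i \<in> J \<Longrightarrow> j \<in> J \<Longrightarrow> i \<noteq> j \<Longrightarrow> g i x = 0 \<or> g j x = 0"
  shows "S (\<lambda>x. \<Sum>j\<in>J. g j x) = (\<Sum>j\<in>J. S (g j))"
proof -
  have pt: "norm (\<Sum>j\<in>J. g j x) powr p = (\<Sum>j\<in>J. norm (g j x) powr p)" for x
  proof (cases "\<exists>j\<in>J. g j x \<noteq> 0")
    case True
    then obtain j0 where j0: "j0 \<in> J" "g j0 x \<noteq> 0" by blast
    have z: "g j x = 0" if "j \<in> J" "j \<noteq> j0" for j using disj[of j j0 x] j0 that by auto
    have "(\<Sum>j\<in>J. g j x) = g j0 x"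
      using J j0 z by (subst sum.remove[OF J j0(1)]) (auto intro!: sum.neutral)
    moreover have "(\<Sum>j\<in>J. norm (g j x) powr p) = norm (g j0 x) powr p"
      using J j0 z p0 by (subst sum.remove[OF J j0(1)]) (auto intro!: sum.neutral)
    ultimately show ?thesis by simp
  next
    case False
    then show ?thesis using p0 by simp
  qed
  have "S (\<lambda>x. \<Sum>j\<in>J. g j x) = infsum (\<lambda>x. \<Sum>j\<in>J. norm (g j x) powr p) UNIV"
    by (simp add: pt)
  also have "\<dots> = (\<Sum>j\<in>J. S (g j))"
    using J g
  proof (induction J rule: finite_induct)
    case empty then show ?case by simp
  next
    case (insert j J)
    have s1: "(\<lambda>x. norm (g j x) powr p) summable_on UNIV" using insert by (simp add: X_iff)
    have s2: "(\<lambda>x. \<Sum>j\<in>J. norm (g j x) powr p) summable_on UNIV"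
      using insert by (intro summable_on_fsum) (auto simp: X_iff)
    have "infsum (\<lambda>x. \<Sum>j\<in>insert j J. norm (g j x) powr p) UNIV
        = infsum (\<lambda>x. norm (g j x) powr p + (\<Sum>j\<in>J. norm (g j x) powr p)) UNIV"
      using insert by simp
    also have "\<dots> = S (g j) + infsum (\<lambda>x. \<Sum>j\<in>J. norm (g j x) powr p) UNIV"
      using s1 s2 by (rule infsum_add)
    finally show ?case using insert by simp
  qed
  finally show ?thesis .
qed

end

lemma dep_exists:
  fixes a :: "'j \<Rightarrow> 'f \<Rightarrow> complex"
  assumes "finite F" "finite J" "card F < card J"
  shows "\<exists>c. (\<exists>j\<in>J. c j \<noteq> 0) \<and> (\<forall>f\<in>F. (\<Sum>j\<in>J. c j * a j f) = 0)"
  using assms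
proof (induction F arbitrary: J a rule: finite_induct)
  case empty
  then obtain j where "j \<in> J" by (metis card.empty ex_in_conv less_irrefl)
  then show ?case by (intro exI[of _ "\<lambda>_. 1"]) auto
next
  case (insert f0 F)
  show ?case
  proof (cases "\<forall>j\<in>J. a j f0 = 0")
    case True
    have "card F < card J" using insert by simp
    then obtain c where c: "\<exists>j\<in>J. c j \<noteq> 0" "\<forall>f\<in>F. (\<Sum>j\<in>J. c j * a j f) = 0"
      using insert.IH[of J a] insert by blast
    then show ?thesis using True by (intro exI[of _ c]) auto
  next
    case False
    then obtain j1 where j1: "j1 \<in> J" "a j1 f0 \<noteq> 0" by blast
    define J' where "J' = J - {j1}"
    define a' where "a' j f = a j f - (a j f0 / a j1 f0) * a j1 f" for j f
    have "card J' = card J - 1" using j1 insert by (simp add: J'_def)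
    then have "card F < card J'" using insert by simp
    then obtain c' where c': "\<exists>j\<in>J'. c' j \<noteq> 0" "\<forall>f\<in>F. (\<Sum>j\<in>J'. c' j * a' j f) = 0"
    proof -
      have "finite J'" using insert by (simp add: J'_def)
      then show ?thesis using insert.IH[of J' a'] \<open>card F < card J'\<close> that by blast
    qed
    define c where "c j = (if j = j1 then - (\<Sum>j\<in>J'. c' j * a j f0) / a j1 f0 else c' j)" for j
    have sumJ: "(\<Sum>j\<in>J. c j * a j f) = c j1 * a j1 f + (\<Sum>j\<in>J'. c' j * a j f)" for f
    proof -
      have "(\<Sum>j\<in>J. c j * a j f) = c j1 * a j1 f + (\<Sum>j\<in>J'. c j * a j f)"
        unfolding J'_def by (rule sum.remove[OF insert.prems(1) j1(1)])
      also have "(\<Sum>j\<in>J'. c j * a j f) = (\<Sum>j\<in>J'. c' j * a j f)"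
        by (rule sum.cong) (auto simp: c_def J'_def)
      finally show ?thesis .
    qed
    have z0: "(\<Sum>j\<in>J. c j * a j f0) = 0"
      unfolding sumJ using j1 by (simp add: c_def)
    have zF: "(\<Sum>j\<in>J. c j * a j f) = 0" if "f \<in> F" for f
    proof -
      have "(\<Sum>j\<in>J'. c' j * a' j f) = (\<Sum>j\<in>J'. c' j * a j f) - (\<Sum>j\<in>J'. c' j * a j f0) / a j1 f0 * a j1 f"
        by (simp add: a'_def algebra_simps sum_subtractf sum_distrib_left sum_divide_distrib sum_distrib_right)
      then have "(\<Sum>j\<in>J'. c' j * a j f) - (\<Sum>j\<in>J'. c' j * a j f0) / a j1 f0 * a j1 f = 0"
        using c'(2) that by simp
      then show ?thesis unfolding sumJ using j1 by (simp add: c_def algebra_simps)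
    qed
    have "\<exists>j\<in>J. c j \<noteq> 0" using c'(1) by (auto simp: c_def J'_def)
    then show ?thesis using z0 zF by (intro exI[of _ c]) auto
  qed
qed


lemma comb_closed:
  assumes "(\<lambda>x. 0) \<in> R" "\<And>u v. u \<in> R \<Longrightarrow> v \<in> R \<Longrightarrow> (\<lambda>x. u x + v x) \<in> R"
    "\<And>u c. u \<in> R \<Longrightarrow> (\<lambda>x. c * u x) \<in> R"
    "finite J" "\<And>j. j \<in> J \<Longrightarrow> r j \<in> R"
  shows "(\<lambda>x. \<Sum>j\<in>J. c j * r j x) \<in> R"
  using assms(4,5)
proof (induction J rule: finite_induct)
  case empty then show ?case using assms(1) by simp
next
  case (insert j J)
  then show ?case using assms(2)[OF assms(3)[of "r j" "c j"], of "\<lambda>x. \<Sum>j\<in>J. c j * r j x"] by simp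
qed

lemma dep_mod:
  fixes w :: "'j \<Rightarrow> ('a \<Rightarrow> complex)"
  assumes F: "finite F" and J: "finite J" and card: "card F < card J"
    and w: "\<And>j. j \<in> J \<Longrightarrow> \<exists>r\<in>R. (\<lambda>x. w j x - r x) \<in> cspan_fun F"
    and R0: "(\<lambda>x. 0) \<in> R" and Radd: "\<And>u v. u \<in> R \<Longrightarrow> v \<in> R \<Longrightarrow> (\<lambda>x. u x + v x) \<in> R"
    and Rsc: "\<And>u c. u \<in> R \<Longrightarrow> (\<lambda>x. c * u x) \<in> R"
  shows "\<exists>c. (\<exists>j\<in>J. c j \<noteq> 0) \<and> (\<lambda>x. \<Sum>j\<in>J. c j * w j x) \<in> R"
proof -
  have "\<forall>j\<in>J. \<exists>r a. r \<in> R \<and> (\<forall>x. w j x - r x = (\<Sum>g\<in>F. a g * g x))"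
  proof
    fix j assume "j \<in> J"
    then obtain r where r: "r \<in> R" "(\<lambda>x. w j x - r x) \<in> cspan_fun F" using w by blast
    then obtain G co where G: "finite G" "G \<subseteq> F" "(\<lambda>x. w j x - r x) = (\<lambda>x. \<Sum>g\<in>G. co g * g x)"
      by (auto simp: cspan_fun_def)
    define a where "a g = (if g \<in> G then co g else 0)" for g
    have "w j x - r x = (\<Sum>g\<in>F. a g * g x)" for x
    proof -
      have "w j x - r x = (\<Sum>g\<in>G. co g * g x)" using G(3) by meson
      also have "\<dots> = (\<Sum>g\<in>G. a g * g x)" by (rule sum.cong) (auto simp: a_def)
      also have "\<dots> = (\<Sum>g\<in>F. a g * g x)"
        by (rule sum.mono_neutral_left) (use F G in \<open>auto simp: a_def\<close>)
      finally show ?thesis .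
    qed
    then show "\<exists>r a. r \<in> R \<and> (\<forall>x. w j x - r x = (\<Sum>g\<in>F. a g * g x))" using r by blast
  qed
  then obtain r a where ra: "\<And>j. j \<in> J \<Longrightarrow> r j \<in> R" "\<And>j x. j \<in> J \<Longrightarrow> w j x - r j x = (\<Sum>g\<in>F. a j g * g x)"
    by metis
  obtain c where c: "\<exists>j\<in>J. c j \<noteq> 0" "\<forall>g\<in>F. (\<Sum>j\<in>J. c j * a j g) = 0"
    using dep_exists[OF F J card, of a] by blast
  have eq: "(\<Sum>j\<in>J. c j * w j x) = (\<Sum>j\<in>J. c j * r j x)" for x
  proof -
    have "(\<Sum>j\<in>J. c j * w j x) = (\<Sum>j\<in>J. c j * r j x) + (\<Sum>j\<in>J. c j * (w j x - r j x))"
      by (simp add: algebra_simps sum.distrib[symmetric])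
    also have "(\<Sum>j\<in>J. c j * (w j x - r j x)) = (\<Sum>j\<in>J. \<Sum>g\<in>F. c j * a j g * g x)"
      using ra(2) by (simp add: sum_distrib_left mult.assoc)
    also have "\<dots> = (\<Sum>g\<in>F. (\<Sum>j\<in>J. c j * a j g) * g x)"
      by (subst sum.swap) (simp add: sum_distrib_right)
    also have "\<dots> = 0" using c(2) by simp
    finally show ?thesis by simp
  qed
  have "(\<lambda>x. \<Sum>j\<in>J. c j * r j x) \<in> R"
    by (rule comb_closed[OF R0 Radd Rsc J ra(1)])
  then show ?thesis using c(1) eq by (intro exI[of _ c]) simp
qed

definition V :: "int \<Rightarrow> int ^ 'n" where "V k = (\<chi> i. k)"

lemma V_add: "V a + V b = V (a + b)" by (simp add: V_def vec_eq_iff)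
lemma V_neg: "- V a = V (- a)" by (simp add: V_def vec_eq_iff)
lemma V_0: "V 0 = 0" by (simp add: V_def vec_eq_iff)
lemma V_inj: "(V a :: int ^ 'n) = V b \<longleftrightarrow> a = b" by (simp add: V_def vec_eq_iff)

locale lpa = lpc p for p +
  fixes act :: "int ^ 'n \<Rightarrow> 'a \<Rightarrow> 'a"
  assumes act0: "\<And>x. act 0 x = x"
    and act_add: "\<And>a b x. act (a + b) x = act a (act b x)"
    and free: "\<And>a x. act a x = x \<Longrightarrow> a = 0"
begin

lemma act_inv: "act (-a) (act a x) = x" "act a (act (-a) x) = x"
  using act_add[of "-a" a x] act_add[of a "-a" x] act0 by simp_all

lemma act_inj: "act a x = act b x \<Longrightarrow> a = b"
proof -
  assume "act a x = act b x"
  then have "act (-b) (act a x) = x" using act_inv by simp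
  then have "act (-b + a) x = x" by (simp only: act_add)
  then have "-b + a = 0" by (rule free)
  then show "a = b" by (simp add: algebra_simps)
qed

lemma bij_act: "bij (act a)"
  by (rule bij_betw_byWitness[where f'="act (-a)"]) (auto simp: act_inv)

lemma shift_shift: "shift act a (shift act b g) = shift act (a + b) g"
  by (simp add: shift_def act_add[symmetric] add.commute)

lemma shift_0: "shift act 0 g = g"
  by (simp add: shift_def act0)

lemma S_shift: "S (shift act a g) = S g"
  unfolding shift_def using infsum_reindex_bij_betw[OF bij_act[of "-a"], of "\<lambda>x. norm (g x) powr p"] by simp

lemma X_shift: "g \<in> X \<Longrightarrow> shift act a g \<in> X"
  unfolding shift_def X_iff using summable_on_reindex_bij_betw[OF bij_act[of "-a"], of "\<lambda>x. norm (g x) powr p"] by simp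

lemma N_shift: "N (shift act a g) = N g"
  by (simp add: N_from_S S_shift)

lemma shift_comb: "shift act a (\<lambda>x. \<Sum>j\<in>J. c j * g j x) = (\<lambda>x. \<Sum>j\<in>J. c j * shift act a (g j) x)"
  by (simp add: shift_def)

lemma shift_app: "shift act a g x = g (act (-a) x)" by (simp add: shift_def)

lemma good_L:
  fixes G :: "'a set" and m :: nat
  assumes G: "finite G"
  shows "\<exists>L::int. \<forall>d g1 g2. d \<in> {-int m..int m} - {0} \<longrightarrow> g1 \<in> G \<longrightarrow> g2 \<in> G \<longrightarrow> act (V (d * L)) g1 \<noteq> g2"
proof -
  define B where "B = (\<Union>(d,g1,g2)\<in>({-int m..int m} - {0}) \<times> G \<times> G. {L. act (V (d * L)) g1 = g2})"
  have sub: "finite {L. act (V (d * L)) g1 = g2}" if "d \<noteq> 0" for d g1 g2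
  proof -
    have "\<forall>L1 L2. L1 \<in> {L. act (V (d * L)) g1 = g2} \<longrightarrow> L2 \<in> {L. act (V (d * L)) g1 = g2} \<longrightarrow> L1 = L2"
    proof (intro allI impI)
      fix L1 L2 assume "L1 \<in> {L. act (V (d * L)) g1 = g2}" "L2 \<in> {L. act (V (d * L)) g1 = g2}"
      then have "act (V (d * L1)) g1 = act (V (d * L2)) g1" by simp
      then have "V (d * L1) = (V (d * L2) :: int ^ 'n)" by (rule act_inj)
      then show "L1 = L2" using that by (simp add: V_inj)
    qed
    then show ?thesis
      by (metis (no_types, lifting) finite.emptyI finite_insert finite_subset insertI1 subsetI equals0I singleton_iff)
  qed
  have "finite B" unfolding B_def using G sub by (intro finite_UN_I) auto
  then obtain L where "L \<notin> B" using ex_new_if_finite[OF infinite_UNIV_int] by blast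
  then show ?thesis unfolding B_def by blast
qed

end

context lpc begin
lemma S_scale: "u \<in> X \<Longrightarrow> S (\<lambda>x. c * u x) = norm c powr p * S u"
  using N_scale[of u c] N_powr[of u] N_powr[of "\<lambda>x. c * u x"] N_nonneg[of u]
  by (simp add: powr_mult)
end

context lpa begin

lemma core:
  fixes m :: nat and t e :: real and R :: "('a \<Rightarrow> complex) set"
  assumes w: "w \<in> X"
    and R0: "(\<lambda>x. 0) \<in> R" and Radd: "\<And>u v. u \<in> R \<Longrightarrow> v \<in> R \<Longrightarrow> (\<lambda>x. u x + v x) \<in> R"
    and Rsc: "\<And>u c. u \<in> R \<Longrightarrow> (\<lambda>x. c * u x) \<in> R"
    and Rsh: "\<And>u a. u \<in> R \<Longrightarrow> shift act a u \<in> R"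
    and dep: "\<And>L::int. \<exists>c. (\<exists>j\<in>{0..m}. c j \<noteq> 0) \<and> (\<lambda>x. \<Sum>j\<in>{0..m}. c j * shift act (V (int j * L)) w x) \<in> R"
    and t: "0 < t" "t < 1" and th: "(1-t) powr p + real m * t powr p \<le> 1"
    and e: "e > 0"
  shows "\<exists>r\<in>R. N (\<lambda>x. w x - r x) \<le> ((1-t) powr p + real m * t powr p) powr (1/p) * N w + e"
proof -
  define \<theta> where "\<theta> = (1-t) powr p + real m * t powr p"
  have th0: "0 \<le> \<theta>" using t by (simp add: \<theta>_def)
  have th1: "\<theta> \<le> 1" using th by (simp add: \<theta>_def)
  define J where "J = {0..m}"
  have J: "finite J" "card J = m + 1" by (auto simp: J_def)
  define e' where "e' = e / (m + 2)"
  have e': "e' > 0" using e by (simp add: e'_def)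
  obtain G where G: "finite G" "(\<lambda>x. if x \<in> G then w x else 0) \<in> X"
      "N (\<lambda>x. w x - (if x \<in> G then w x else 0)) < e'"
    using tail_approx[OF w e'] by blast
  define w' where "w' = (\<lambda>x. if x \<in> G then w x else 0)"
  have w': "w' \<in> X" using G by (simp add: w'_def)
  define d where "d = (\<lambda>x. w x - w' x)"
  have d: "d \<in> X" "N d < e'" using G X_diff[OF w w'] by (auto simp: d_def w'_def)
  obtain L :: int where L: "\<And>dd g1 g2. dd \<in> {-int m..int m} - {0} \<Longrightarrow> g1 \<in> G \<Longrightarrow> g2 \<in> G \<Longrightarrow> act (V (dd * L)) g1 \<noteq> g2"
    using good_L[OF G(1), of m] by blast
  obtain c where c: "\<exists>j\<in>J. c j \<noteq> 0" "(\<lambda>x. \<Sum>j\<in>J. c j * shift act (V (int j * L)) w x) \<in> R"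
    using dep[of L] unfolding J_def by blast
  obtain j0 where j0: "j0 \<in> J" "\<And>j. j \<in> J \<Longrightarrow> norm (c j) \<le> norm (c j0)"
  proof -
    have "J \<noteq> {}" by (auto simp: J_def)
    have "Max ((\<lambda>j. norm (c j)) ` J) \<in> (\<lambda>j. norm (c j)) ` J"
      using J(1) \<open>J \<noteq> {}\<close> by (intro Max_in) auto
    then obtain j0 where "j0 \<in> J" "norm (c j0) = Max ((\<lambda>j. norm (c j)) ` J)" by auto
    moreover have "\<And>j. j \<in> J \<Longrightarrow> norm (c j) \<le> Max ((\<lambda>j. norm (c j)) ` J)"
      using J(1) by (intro Max_ge) auto
    ultimately show ?thesis using that by auto
  qed
  have cj0: "c j0 \<noteq> 0" using c(1) j0 by force
  define ofs where "ofs j = (V ((int j - int j0) * L) :: int ^ 'n)" for j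
  define b where "b j = c j / c j0" for j
  have b1: "norm (b j) \<le> 1" if "j \<in> J" for j
    using j0(2)[OF that] cj0 by (simp add: b_def norm_divide divide_le_eq_1)
  have bj0: "b j0 = 1" using cj0 by (simp add: b_def)
  define q where "q = (\<lambda>x. \<Sum>j\<in>J. b j * shift act (ofs j) w x)"
  have qR: "q \<in> R"
  proof -
    have "shift act (V (-(int j0 * L))) (\<lambda>x. \<Sum>j\<in>J. c j * shift act (V (int j * L)) w x) \<in> R"
      using Rsh[OF c(2)] .
    moreover have "shift act (V (-(int j0 * L))) (\<lambda>x. \<Sum>j\<in>J. c j * shift act (V (int j * L)) w x)
        = (\<lambda>x. \<Sum>j\<in>J. c j * shift act (ofs j) w x)"
    proof -
      have "shift act (V (-(int j0 * L))) (shift act (V (int j * L)) w) = shift act (ofs j) w" for j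
        by (simp add: shift_shift V_add ofs_def algebra_simps)
      then show ?thesis by (simp add: shift_comb)
    qed
    ultimately have "(\<lambda>x. \<Sum>j\<in>J. c j * shift act (ofs j) w x) \<in> R" by simp
    from Rsc[OF this, of "1 / c j0"] show ?thesis
      by (simp add: q_def b_def sum_distrib_left)
  qed
  define r where "r = (\<lambda>x. of_real t * q x)"
  have rR: "r \<in> R" using Rsc[OF qR] by (simp add: r_def)
  define k where "k j = (if j = j0 then 1 else 0) - of_real t * b j" for j
  define \<Phi> where "\<Phi> g = (\<lambda>x. \<Sum>j\<in>J. k j * shift act (ofs j) g x)" for g
  have oj0: "ofs j0 = 0" by (simp add: ofs_def V_0)
  have wr: "(\<lambda>x. w x - r x) = \<Phi> w"
  proof
    fix x
    have "\<Phi> w x = (\<Sum>j\<in>J. (if j = j0 then 1 else 0) * shift act (ofs j) w x) - of_real t * q x"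
      by (simp add: \<Phi>_def k_def q_def algebra_simps sum_subtractf sum_distrib_left)
    also have "(\<Sum>j\<in>J. (if j = j0 then 1 else 0) * shift act (ofs j) w x) = shift act (ofs j0) w x"
    proof -
      have "(\<Sum>j\<in>J. (if j = j0 then 1 else 0) * shift act (ofs j) w x) = (\<Sum>j\<in>J. if j0 = j then shift act (ofs j) w x else 0)"
        by (rule sum.cong) auto
      then show ?thesis using J(1) j0(1) by (simp add: sum.delta)
    qed
    finally show "w x - r x = \<Phi> w x" using oj0 by (simp add: shift_0 r_def)
  qed
  have lin: "\<Phi> w = (\<lambda>x. \<Phi> w' x + \<Phi> d x)"
    by (simp add: \<Phi>_def d_def shift_app algebra_simps sum.distrib[symmetric])
  have one_t: "norm (1 - complex_of_real t) = 1 - t"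
  proof -
    have "1 - complex_of_real t = complex_of_real (1 - t)" by simp
    then show ?thesis using t by (simp only: norm_of_real)
  qed
  have kle: "norm (k j) \<le> 1" if "j \<in> J" for j
  proof (cases "j = j0")
    case True then show ?thesis using t by (simp add: k_def bj0 one_t)
  next
    case False
    then have "norm (k j) = t * norm (b j)" using t by (simp add: k_def norm_mult)
    also have "\<dots> \<le> t * 1" using b1[OF that] t by (intro mult_left_mono) auto
    finally show ?thesis using t by simp
  qed
  have kj0: "norm (k j0) = 1 - t" using t by (simp add: k_def bj0 one_t)
  have kt: "norm (k j) \<le> t" if "j \<in> J" "j \<noteq> j0" for j
  proof -
    have "norm (k j) = t * norm (b j)" using t that by (simp add: k_def norm_mult)
    also have "\<dots> \<le> t * 1" using b1[OF that(1)] t by (intro mult_left_mono) auto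
    finally show ?thesis by simp
  qed
  have Nd: "N (\<Phi> d) \<le> (m + 1) * e'"
  proof -
    have "N (\<Phi> d) \<le> (\<Sum>j\<in>J. norm (k j) * N (shift act (ofs j) d))"
      unfolding \<Phi>_def using X_sum[OF J(1), of "\<lambda>j. shift act (ofs j) d" k] X_shift[OF d(1)] by blast
    also have "\<dots> \<le> (\<Sum>j\<in>J. e')"
    proof (rule sum_mono)
      fix j assume "j \<in> J"
      have "norm (k j) * N (shift act (ofs j) d) \<le> 1 * N d"
        using kle[OF \<open>j \<in> J\<close>] N_nonneg[of d] by (simp add: N_shift mult_left_le_one_le)
      then show "norm (k j) * N (shift act (ofs j) d) \<le> e'" using d(2) by simp
    qed
    finally show ?thesis using J(2) by simp
  qed
  have disj: "(\<lambda>x. k i * shift act (ofs i) w' x) x = 0 \<or> (\<lambda>x. k j * shift act (ofs j) w' x) x = 0"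
    if ij: "i \<in> J" "j \<in> J" "i \<noteq> j" for i j x
  proof (rule ccontr)
    assume "\<not> ?thesis"
    then have ne: "w' (act (- ofs i) x) \<noteq> 0" "w' (act (- ofs j) x) \<noteq> 0" by (auto simp: shift_app)
    define g1 where "g1 = act (- ofs i) x"
    define g2 where "g2 = act (- ofs j) x"
    have g: "g1 \<in> G" "g2 \<in> G" using ne by (auto simp: w'_def g1_def g2_def split: if_splits)
    have "act (- ofs j + ofs i) g1 = g2"
      by (simp add: g1_def g2_def flip: act_add)
    moreover have "- ofs j + ofs i = V ((int i - int j) * L)"
      by (simp add: ofs_def V_neg V_add algebra_simps)
    moreover have "int i - int j \<in> {-int m..int m} - {0}" using ij by (auto simp: J_def)
    ultimately show False using L g by metis
  qed
  have SPhi: "S (\<Phi> w') = (\<Sum>j\<in>J. norm (k j) powr p * S w')"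
  proof -
    have "S (\<Phi> w') = (\<Sum>j\<in>J. S (\<lambda>x. k j * shift act (ofs j) w' x))"
      unfolding \<Phi>_def
      by (rule S_disjoint_sum[OF J(1)]) (use X_scale X_shift w' disj in auto)
    also have "\<dots> = (\<Sum>j\<in>J. norm (k j) powr p * S w')"
      by (rule sum.cong) (simp_all add: S_scale X_shift w' S_shift)
    finally show ?thesis .
  qed
  have ksum: "(\<Sum>j\<in>J. norm (k j) powr p) \<le> \<theta>"
  proof -
    have "(\<Sum>j\<in>J. norm (k j) powr p) = norm (k j0) powr p + (\<Sum>j\<in>J - {j0}. norm (k j) powr p)"
      by (rule sum.remove[OF J(1) j0(1)])
    also have "(\<Sum>j\<in>J - {j0}. norm (k j) powr p) \<le> (\<Sum>j\<in>J - {j0}. t powr p)"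
      using kt p0 by (intro sum_mono powr_mono2) auto
    also have "(\<Sum>j\<in>J - {j0}. t powr p) = real m * t powr p"
      using J j0(1) by (simp add: card_Diff_singleton)
    finally show ?thesis by (simp add: kj0 \<theta>_def)
  qed
  have SPhi2: "S (\<Phi> w') \<le> \<theta> * S w'"
    unfolding SPhi sum_distrib_right[symmetric] using ksum S_nonneg[of w'] by (rule mult_right_mono)
  have NPhi: "N (\<Phi> w') \<le> \<theta> powr (1/p) * N w'"
  proof -
    have "N (\<Phi> w') \<le> (\<theta> * S w') powr (1/p)"
      unfolding N_from_S using powr_mono2[OF _ S_nonneg SPhi2, of "1/p"] p0 by simp
    also have "\<dots> = \<theta> powr (1/p) * N w'" using th0 S_nonneg by (simp add: powr_mult N_from_S)
    finally show ?thesis .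
  qed
  have Nw': "N w' \<le> N w + e'"
  proof -
    have "w' = (\<lambda>x. w x - d x)" by (simp add: d_def)
    then have "N w' \<le> N w + N d" using N_diff[OF w d(1)] by simp
    then show ?thesis using d(2) by simp
  qed
  have Phiw'X: "\<Phi> w' \<in> X" unfolding \<Phi>_def using X_sum[OF J(1), of "\<lambda>j. shift act (ofs j) w'" k] X_shift[OF w'] by blast
  have PhidX: "\<Phi> d \<in> X" unfolding \<Phi>_def using X_sum[OF J(1), of "\<lambda>j. shift act (ofs j) d" k] X_shift[OF d(1)] by blast
  have "N (\<lambda>x. w x - r x) \<le> N (\<Phi> w') + N (\<Phi> d)"
    unfolding wr lin using N_add[OF Phiw'X PhidX] .
  also have "\<dots> \<le> \<theta> powr (1/p) * (N w + e') + (m + 1) * e'"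
    using NPhi Nw' Nd th0 by (smt (verit, ccfv_SIG) mult_left_mono powr_ge_zero)
  also have "\<dots> \<le> \<theta> powr (1/p) * N w + e"
  proof -
    have "\<theta> powr (1/p) \<le> 1" using powr_mono2[of "1/p" \<theta> 1] th0 th1 p0 by simp
    then have "\<theta> powr (1/p) * e' \<le> e'" using e' by (simp add: mult_left_le_one_le)
    moreover have "e' + (m+1) * e' = (m+2) * e'" by (simp add: algebra_simps)
    moreover have "(m+2) * e' = e" unfolding e'_def by (simp add: field_simps)
    ultimately show ?thesis by (simp add: algebra_simps)
  qed
  finally show ?thesis using rR \<theta>_def by blast
qed

end

context lpc begin

lemma choose_t: "\<exists>t. 0 < t \<and> t < 1 \<and> (1-t) powr p + real m * t powr p < 1"
proof -
  define s where "s = (1 / (2 * (real m + 1))) powr (1 / (p - 1))"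
  have s0: "s > 0" by (simp add: s_def)
  define t where "t = min (1/2) s"
  have t0: "0 < t" "t < 1" using s0 by (auto simp: t_def)
  have "t powr (p - 1) \<le> s powr (p - 1)" using t0 p1 by (intro powr_mono2) (auto simp: t_def)
  also have "\<dots> = 1 / (2 * (real m + 1))" using p1 by (simp add: s_def powr_powr)
  finally have tp: "t powr (p - 1) \<le> 1 / (2 * (real m + 1))" .
  have "t powr p = t * t powr (p - 1)"
    using t0 by (metis add.commute diff_add_cancel powr_add powr_one less_imp_le)
  then have "real m * t powr p \<le> real m * (t * (1 / (2 * (real m + 1))))"
  proof -
    have "t * t powr (p - 1) \<le> t * (1 / (2 * (real m + 1)))" using tp t0 by (intro mult_left_mono) auto
    then show ?thesis using \<open>t powr p = t * t powr (p - 1)\<close> by (intro mult_left_mono) auto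
  qed
  also have "\<dots> = t * (real m / (2 * (real m + 1)))" by simp
  also have "\<dots> < t * 1" using t0 by (intro mult_strict_left_mono) (auto simp: field_simps)
  finally have 1: "real m * t powr p < t" by simp
  have 2: "(1 - t) powr p \<le> 1 - t" using t0 p1 by (intro powr_le_self) auto
  show ?thesis using 1 2 t0 by (intro exI[of _ t]) auto
qed

end

context lpa begin

lemma core2:
  fixes F :: "('a \<Rightarrow> complex) set" and R :: "('a \<Rightarrow> complex) set"
  assumes F: "finite F" and w: "w \<in> X"
    and R0: "(\<lambda>x. 0) \<in> R" and Radd: "\<And>u v. u \<in> R \<Longrightarrow> v \<in> R \<Longrightarrow> (\<lambda>x. u x + v x) \<in> R"
    and Rsc: "\<And>u c. u \<in> R \<Longrightarrow> (\<lambda>x. c * u x) \<in> R"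
    and Rsh: "\<And>u a. u \<in> R \<Longrightarrow> shift act a u \<in> R"
    and sp: "\<And>a. \<exists>r\<in>R. (\<lambda>x. shift act a w x - r x) \<in> cspan_fun F"
  shows "\<exists>\<theta>. 0 \<le> \<theta> \<and> \<theta> < 1 \<and> (\<forall>e>0. \<exists>r\<in>R. N (\<lambda>x. w x - r x) \<le> \<theta> * N w + e)"
proof -
  define m where "m = card F"
  obtain t where t: "0 < t" "t < 1" "(1-t) powr p + real m * t powr p < 1"
    using choose_t by blast
  define \<theta> where "\<theta> = ((1-t) powr p + real m * t powr p) powr (1/p)"
  have th0: "0 \<le> (1-t) powr p + real m * t powr p" by simp
  have "\<theta> < 1 powr (1/p)" unfolding \<theta>_def using t(3) th0 p0 by (intro powr_less_mono2) auto
  then have th1: "\<theta> < 1" by simp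
  have dep: "\<exists>c. (\<exists>j\<in>{0..m}. c j \<noteq> 0) \<and> (\<lambda>x. \<Sum>j\<in>{0..m}. c j * shift act (V (int j * L)) w x) \<in> R" for L :: int
  proof -
    have c: "card F < card {0..m}" by (simp add: m_def)
    have ww: "\<And>j. j \<in> {0..m} \<Longrightarrow> \<exists>r\<in>R. (\<lambda>x. shift act (V (int j * L)) w x - r x) \<in> cspan_fun F"
      by (rule sp)
    from dep_mod[OF F finite_atLeastAtMost c ww R0 Radd Rsc] show ?thesis .
  qed
  have "\<exists>r\<in>R. N (\<lambda>x. w x - r x) \<le> \<theta> * N w + e" if "e > 0" for e
    unfolding \<theta>_def by (rule core[OF w R0 Radd Rsc Rsh dep t(1,2) less_imp_le[OF t(3)] that])
  moreover have "0 \<le> \<theta>" by (simp add: \<theta>_def)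
  ultimately show ?thesis using th1 by blast
qed

lemma kernel_trivial:
  assumes F: "finite F" and u: "u \<in> X" and sp: "\<And>a. shift act a u \<in> cspan_fun F"
  shows "u = (\<lambda>x. 0)"
proof -
  have Rsh: "shift act a v \<in> {\<lambda>x. 0}" if "v \<in> {\<lambda>x. 0}" for v a
    using that by (simp add: shift_def)
  obtain \<theta> where th: "0 \<le> \<theta>" "\<theta> < 1" "\<And>e. e > 0 \<Longrightarrow> \<exists>r\<in>{\<lambda>x. 0}. N (\<lambda>x. u x - r x) \<le> \<theta> * N u + e"
    using core2[OF F u, of "{\<lambda>x. 0}"] Rsh sp by auto
  have "N u \<le> \<theta> * N u + e" if "e > 0" for e using th(3)[OF that] by simp
  then have "(1 - \<theta>) * N u \<le> e" if "e > 0" for e using that by (simp add: algebra_simps)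
  then have "(1 - \<theta>) * N u \<le> 0" by (meson dense not_le)
  then have "N u \<le> 0" using th(2) by (simp add: mult_le_0_iff)
  then have "N u = 0" using N_nonneg[of u] by simp
  then show ?thesis using N_eq_0D[OF u] by simp
qed

lemma cokernel_trivial:
  assumes F: "finite F"
    and RX: "R \<subseteq> X"
    and R0: "(\<lambda>x. 0) \<in> R" and Radd: "\<And>u v. u \<in> R \<Longrightarrow> v \<in> R \<Longrightarrow> (\<lambda>x. u x + v x) \<in> R"
    and Rsc: "\<And>u c. u \<in> R \<Longrightarrow> (\<lambda>x. c * u x) \<in> R"
    and Rsh: "\<And>u a. u \<in> R \<Longrightarrow> shift act a u \<in> R"
    and closed: "\<And>v. v \<in> X \<Longrightarrow> (\<forall>e>0. \<exists>r\<in>R. N (\<lambda>x. r x - v x) < e) \<Longrightarrow> v \<in> R"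
    and sp: "\<And>v. v \<in> X \<Longrightarrow> \<exists>r\<in>R. (\<lambda>x. v x - r x) \<in> cspan_fun F"
    and v: "v \<in> X"
  shows "v \<in> R"
proof (rule ccontr)
  assume vR: "v \<notin> R"
  define D where "D = (\<lambda>r. N (\<lambda>x. v x - r x)) ` R"
  define \<delta> where "\<delta> = Inf D"
  have Dne: "D \<noteq> {}" using R0 by (auto simp: D_def)
  have Dbdd: "bdd_below D" unfolding D_def by (rule bdd_belowI[of _ 0]) (auto simp: N_nonneg)
  have Dlow: "\<delta> \<le> N (\<lambda>x. v x - r x)" if "r \<in> R" for r
    unfolding \<delta>_def D_def using Dbdd that by (intro cInf_lower) (auto simp: D_def)
  have d0: "\<delta> > 0"
  proof (rule ccontr)
    assume "\<not> \<delta> > 0"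
    then have "\<forall>e>0. \<exists>r\<in>R. N (\<lambda>x. r x - v x) < e"
    proof (intro allI impI)
      fix e :: real assume "e > 0"
      then have "Inf D < e" using \<open>\<not> \<delta> > 0\<close> \<delta>_def by simp
      then obtain y where "y \<in> D" "y < e" using cInf_lessD[OF Dne] by blast
      then show "\<exists>r\<in>R. N (\<lambda>x. r x - v x) < e" by (auto simp: D_def N_commute)
    qed
    then show False using closed[OF v] vR by blast
  qed
  have spw: "\<exists>r\<in>R. (\<lambda>x. shift act a w x - r x) \<in> cspan_fun F" if "w \<in> X" for w a
    using sp[OF X_shift[OF that]] .
  obtain \<theta> where th: "0 \<le> \<theta>" "\<theta> < 1" 
    "\<And>w e. w \<in> X \<Longrightarrow> e > 0 \<Longrightarrow> \<exists>r\<in>R. N (\<lambda>x. w x - r x) \<le> \<theta> * N w + e"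
  proof -
    define m where "m = card F"
    obtain t where t: "0 < t" "t < 1" "(1-t) powr p + real m * t powr p < 1"
      using choose_t by blast
    define \<theta> where "\<theta> = ((1-t) powr p + real m * t powr p) powr (1/p)"
    have th0: "0 \<le> (1-t) powr p + real m * t powr p" by simp
    have "\<theta> < 1 powr (1/p)" unfolding \<theta>_def using t(3) th0 p0 by (intro powr_less_mono2) auto
    then have th1: "\<theta> < 1" by simp
    have "\<exists>r\<in>R. N (\<lambda>x. w x - r x) \<le> \<theta> * N w + e" if w: "w \<in> X" and e: "e > 0" for w e
    proof -
      have dep: "\<exists>c. (\<exists>j\<in>{0..m}. c j \<noteq> 0) \<and> (\<lambda>x. \<Sum>j\<in>{0..m}. c j * shift act (V (int j * L)) w x) \<in> R" for L :: int
      proof -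
        have c: "card F < card {0..m}" by (simp add: m_def)
        have ww: "\<And>j. j \<in> {0..m} \<Longrightarrow> \<exists>r\<in>R. (\<lambda>x. shift act (V (int j * L)) w x - r x) \<in> cspan_fun F"
          by (rule spw[OF w])
        from dep_mod[OF F finite_atLeastAtMost c ww R0 Radd Rsc] show ?thesis .
      qed
      show ?thesis unfolding \<theta>_def by (rule core[OF w R0 Radd Rsc Rsh dep t(1,2) less_imp_le[OF t(3)] e])
    qed
    moreover have "0 \<le> \<theta>" by (simp add: \<theta>_def)
    ultimately show ?thesis using that[of \<theta>] th1 by blast
  qed
  define \<eta> where "\<eta> = \<delta> * (1 - \<theta>) / 4"
  have eta: "\<eta> > 0" using d0 th by (simp add: \<eta>_def)
  have "Inf D < \<delta> + \<eta>" using eta \<delta>_def by simp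
  then obtain y where "y \<in> D" "y < \<delta> + \<eta>" using cInf_lessD[OF Dne] by blast
  then obtain r0 where r0: "r0 \<in> R" "N (\<lambda>x. v x - r0 x) < \<delta> + \<eta>" by (auto simp: D_def)
  define w where "w = (\<lambda>x. v x - r0 x)"
  have w: "w \<in> X" unfolding w_def using X_diff v RX r0 by blast
  obtain r where r: "r \<in> R" "N (\<lambda>x. w x - r x) \<le> \<theta> * N w + \<eta>" using th(3)[OF w eta] by blast
  have "\<theta> * N w \<le> \<theta> * (\<delta> + \<eta>)" using r0 th by (intro mult_left_mono) (auto simp: w_def)
  then have "N (\<lambda>x. w x - r x) \<le> \<theta> * (\<delta> + \<eta>) + \<eta>" using r by simp
  also have "\<dots> < \<delta>"
  proof -
    have "\<theta> * \<eta> \<le> \<eta>" using th eta by (simp add: mult_left_le_one_le)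
    then have "\<theta> * (\<delta> + \<eta>) + \<eta> \<le> \<theta> * \<delta> + 2 * \<eta>" by (simp add: algebra_simps)
    also have "\<dots> < \<delta>"
    proof -
      have "2 * \<eta> = \<delta> * (1 - \<theta>) / 2" by (simp add: \<eta>_def)
      moreover have "\<delta> * \<theta> < \<delta> * 1" using mult_strict_left_mono[OF th(2) d0] .
      ultimately show ?thesis by (simp add: algebra_simps)
    qed
    finally show ?thesis .
  qed
  finally have lt: "N (\<lambda>x. w x - r x) < \<delta>" .
  have "(\<lambda>x. r0 x + r x) \<in> R" using Radd r0 r by blast
  then have "\<delta> \<le> N (\<lambda>x. v x - (r0 x + r x))" by (rule Dlow)
  moreover have "(\<lambda>x. v x - (r0 x + r x)) = (\<lambda>x. w x - r x)" by (simp add: w_def algebra_simps)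
  ultimately show False using lt by simp
qed

end

context lpc begin

lemma pt_diff_le: "u \<in> X \<Longrightarrow> v \<in> X \<Longrightarrow> norm (u x - v x) \<le> N (\<lambda>x. u x - v x)"
  using pt_le[OF X_diff, of u v x] by simp

lemma X_complete:
  fixes \<sigma> :: "nat \<Rightarrow> 'a \<Rightarrow> complex"
  assumes sX: "\<And>k. \<sigma> k \<in> X"
    and cau: "\<And>e. e > 0 \<Longrightarrow> \<exists>K. \<forall>k\<ge>K. \<forall>l\<ge>K. N (\<lambda>x. \<sigma> k x - \<sigma> l x) < e"
  shows "\<exists>s\<in>X. \<forall>e>0. \<exists>K. \<forall>k\<ge>K. N (\<lambda>x. \<sigma> k x - s x) \<le> e"
proof -
  have "Cauchy (\<lambda>k. \<sigma> k x)" for x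
  proof (rule metric_CauchyI)
    fix e :: real assume "e > 0"
    then obtain K where K: "\<forall>k\<ge>K. \<forall>l\<ge>K. N (\<lambda>x. \<sigma> k x - \<sigma> l x) < e" using cau by blast
    show "\<exists>M. \<forall>m\<ge>M. \<forall>n\<ge>M. dist (\<sigma> m x) (\<sigma> n x) < e"
      using K pt_diff_le[OF sX sX] by (metis dist_norm order_le_less_trans)
  qed
  then have "convergent (\<lambda>k. \<sigma> k x)" for x using Cauchy_convergent by blast
  then obtain s where s: "\<And>x. (\<lambda>k. \<sigma> k x) \<longlonglongrightarrow> s x"
    unfolding convergent_def by metis
  have main: "(\<lambda>x. \<sigma> k x - s x) \<in> X \<and> N (\<lambda>x. \<sigma> k x - s x) \<le> e"
    if e: "e > 0" and K: "\<forall>k\<ge>K. \<forall>l\<ge>K. N (\<lambda>x. \<sigma> k x - \<sigma> l x) < e" and k: "k \<ge> K" for e K k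
  proof -
    define f where "f x = norm (\<sigma> k x - s x) powr p" for x
    have fin: "sum f G \<le> e powr p" if G: "finite G" for G
    proof -
      have lim: "(\<lambda>l. \<Sum>x\<in>G. norm (\<sigma> k x - \<sigma> l x) powr p) \<longlonglongrightarrow> sum f G"
        unfolding f_def using p0
        by (intro tendsto_sum tendsto_powr' tendsto_norm tendsto_diff tendsto_const s) auto
      have "\<forall>\<^sub>F l in sequentially. (\<Sum>x\<in>G. norm (\<sigma> k x - \<sigma> l x) powr p) \<le> e powr p"
      proof (rule eventually_sequentiallyI[of K])
        fix l assume l: "K \<le> l"
        have "(\<Sum>x\<in>G. norm (\<sigma> k x - \<sigma> l x) powr p) = infsum (\<lambda>x. norm (\<sigma> k x - \<sigma> l x) powr p) G"
          using G by simp
        also have "\<dots> \<le> S (\<lambda>x. \<sigma> k x - \<sigma> l x)"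
          by (rule infsum_mono_neutral) (use G X_diff[OF sX sX, of k l] in \<open>auto simp: X_iff\<close>)
        also have "\<dots> = N (\<lambda>x. \<sigma> k x - \<sigma> l x) powr p" by (simp add: N_powr)
        also have "\<dots> \<le> e powr p" using K k l N_nonneg p0 by (intro powr_mono2) (auto intro: less_imp_le)
        finally show "(\<Sum>x\<in>G. norm (\<sigma> k x - \<sigma> l x) powr p) \<le> e powr p" .
      qed
      from tendsto_upperbound[OF lim this] show ?thesis by simp
    qed
    have fs: "f summable_on UNIV"
      by (rule nonneg_bdd_above_summable_on) (use fin in \<open>auto simp: f_def intro!: bdd_aboveI[of _ "e powr p"]\<close>)
    have "infsum f UNIV \<le> e powr p"
      using fs fin by (rule infsum_le_finite_sums)
    then have "S (\<lambda>x. \<sigma> k x - s x) \<le> e powr p" by (simp add: f_def[abs_def])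
    then have "N (\<lambda>x. \<sigma> k x - s x) \<le> (e powr p) powr (1/p)"
      unfolding N_from_S using powr_mono2[OF _ S_nonneg, of "1/p" _ "e powr p"] p0 by simp
    also have "\<dots> = e" using e p0 by (simp add: powr_powr)
    finally show ?thesis using fs by (simp add: X_iff f_def[abs_def])
  qed
  obtain K1 where K1: "\<forall>k\<ge>K1. \<forall>l\<ge>K1. N (\<lambda>x. \<sigma> k x - \<sigma> l x) < 1" using cau[of 1] by auto
  have "(\<lambda>x. \<sigma> K1 x - s x) \<in> X" using main[OF _ K1] by auto
  then have "(\<lambda>x. \<sigma> K1 x - (\<sigma> K1 x - s x)) \<in> X" using X_diff sX by blast
  then have sXX: "s \<in> X" by simp
  have "\<forall>e>0. \<exists>K. \<forall>k\<ge>K. N (\<lambda>x. \<sigma> k x - s x) \<le> e"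
  proof (intro allI impI)
    fix e :: real assume "e > 0"
    then obtain K where "\<forall>k\<ge>K. \<forall>l\<ge>K. N (\<lambda>x. \<sigma> k x - \<sigma> l x) < e" using cau by blast
    then show "\<exists>K. \<forall>k\<ge>K. N (\<lambda>x. \<sigma> k x - s x) \<le> e" using main \<open>e > 0\<close> by blast
  qed
  then show ?thesis using sXX by blast
qed

end

context lpc begin

lemma bo_X: "bounded_op p C \<Longrightarrow> u \<in> X \<Longrightarrow> C u \<in> X"
  by (simp add: bounded_op_def)
lemma bo_add: "bounded_op p C \<Longrightarrow> u \<in> X \<Longrightarrow> v \<in> X \<Longrightarrow> C (\<lambda>x. u x + v x) = (\<lambda>x. C u x + C v x)"
  by (simp add: bounded_op_def)
lemma bo_scale: "bounded_op p C \<Longrightarrow> u \<in> X \<Longrightarrow> C (\<lambda>x. c * u x) = (\<lambda>x. c * C u x)"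
  by (simp add: bounded_op_def)
lemma bo_zero: "bounded_op p C \<Longrightarrow> C (\<lambda>x. 0) = (\<lambda>x. 0)"
  using bo_scale[of C "\<lambda>x. 0" 0] by simp
lemma bo_diff: "bounded_op p C \<Longrightarrow> u \<in> X \<Longrightarrow> v \<in> X \<Longrightarrow> C (\<lambda>x. u x - v x) = (\<lambda>x. C u x - C v x)"
  using bo_add[of C u "\<lambda>x. (-1) * v x"] bo_scale[of C v "-1"] X_scale[of v "-1"] by simp
lemma bo_bound: "bounded_op p C \<Longrightarrow> \<exists>B\<ge>0. \<forall>u\<in>X. N (C u) \<le> B * N u"
proof -
  assume "bounded_op p C"
  then obtain B where B: "\<forall>u\<in>X. N (C u) \<le> B * N u" by (auto simp: bounded_op_def)
  have "N (C u) \<le> max B 0 * N u" if "u \<in> X" for u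
    using B that N_nonneg[of u] by (smt (verit) mult_right_mono)
  then show ?thesis by (intro exI[of _ "max B 0"]) auto
qed
lemma bo_sum:
  assumes C: "bounded_op p C" shows "finite J \<Longrightarrow> (\<And>j. j \<in> J \<Longrightarrow> g j \<in> X) \<Longrightarrow>
   C (\<lambda>x. \<Sum>j\<in>J. c j * g j x) = (\<lambda>x. \<Sum>j\<in>J. c j * C (g j) x)"
proof (induction J rule: finite_induct)
  case empty then show ?case using bo_zero[OF C] by simp
next
  case (insert j J)
  have a: "(\<lambda>x. c j * g j x) \<in> X" using insert X_scale by auto
  have b: "(\<lambda>x. \<Sum>j\<in>J. c j * g j x) \<in> X" using X_sum[OF insert(1), of g c] insert.prems by auto
  have "C (\<lambda>x. \<Sum>j\<in>insert j J. c j * g j x) = C (\<lambda>x. c j * g j x + (\<Sum>j\<in>J. c j * g j x))"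
    using insert by simp
  also have "\<dots> = (\<lambda>x. C (\<lambda>x. c j * g j x) x + C (\<lambda>x. \<Sum>j\<in>J. c j * g j x) x)"
    by (rule bo_add[OF C a b])
  also have "\<dots> = (\<lambda>x. \<Sum>j\<in>insert j J. c j * C (g j) x)"
    using insert bo_scale[OF C] by simp
  finally show ?case .
qed

lemma N_minus: "N (\<lambda>x. - u x) = N u"
  by (simp add: lp_norm_def)

lemma approx_solve:
  fixes C :: "('a \<Rightarrow> complex) \<Rightarrow> ('a \<Rightarrow> complex)"
  assumes C: "bounded_op p C" and surj: "\<And>v. v \<in> X \<Longrightarrow> \<exists>u\<in>X. C u = v"
  shows "\<exists>K\<ge>0. \<forall>z\<in>X. \<forall>e>0. \<exists>u\<in>X. N u \<le> K * N z \<and> N (\<lambda>x. C u x - z x) < e"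
proof -
  define d where "d u v = N (\<lambda>x. u x - v x)" for u v :: "'a \<Rightarrow> complex"
  interpret M: Metric_space X d
  proof
    show "0 \<le> d x y" for x y by (simp add: d_def N_nonneg)
    show "d x y = d y x" for x y unfolding d_def by (rule N_commute)
    show "d x y = 0 \<longleftrightarrow> x = y" if "x \<in> X" "y \<in> X" for x y
    proof
      assume "d x y = 0"
      then have "(\<lambda>z. x z - y z) = (\<lambda>z. 0)" using N_eq_0D[OF X_diff[OF that]] by (simp add: d_def)
      then show "x = y" by (simp add: fun_eq_iff)
    qed (simp add: d_def)
    show "d x z \<le> d x y + d y z" if "x \<in> X" "y \<in> X" "z \<in> X" for x y z
      using N_tri[OF that] by (simp add: d_def)
  qed
  have mc: "M.mcomplete"
    unfolding M.mcomplete_def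
  proof (intro allI impI)
    fix \<sigma> assume "M.MCauchy \<sigma>"
    then have sX: "\<And>k. \<sigma> k \<in> X" and cau: "\<And>e. e > 0 \<Longrightarrow> \<exists>K. \<forall>k\<ge>K. \<forall>l\<ge>K. N (\<lambda>x. \<sigma> k x - \<sigma> l x) < e"
      unfolding M.MCauchy_def d_def by auto
    obtain s where s: "s \<in> X" "\<forall>e>0. \<exists>K. \<forall>k\<ge>K. N (\<lambda>x. \<sigma> k x - s x) \<le> e"
      using X_complete[OF sX cau] by blast
    have "limitin M.mtopology \<sigma> s sequentially"
      unfolding M.limitin_metric
    proof (intro conjI allI impI)
      show "s \<in> X" by fact
      fix e :: real assume "e > 0"
      then obtain K where "\<forall>k\<ge>K. N (\<lambda>x. \<sigma> k x - s x) \<le> e/2" using s(2) half_gt_zero by blast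
      then show "\<forall>\<^sub>F n in sequentially. \<sigma> n \<in> X \<and> d (\<sigma> n) s < e"
        using sX \<open>e > 0\<close> by (intro eventually_sequentiallyI[of K]) (force simp: d_def)
    qed
    then show "\<exists>x. limitin M.mtopology \<sigma> x sequentially" by blast
  qed
  define T where "T k = {v \<in> X. \<forall>e>0. \<exists>u\<in>X. N u \<le> real k \<and> N (\<lambda>x. C u x - v x) < e}" for k :: nat
  have Tclosed: "closedin M.mtopology (T k)" for k
    unfolding M.closedin_metric
  proof (intro conjI allI impI)
    show "T k \<subseteq> X" by (auto simp: T_def)
    fix v assume v: "v \<in> X - T k"
    then obtain e0 where e0: "e0 > 0" "\<And>u. u \<in> X \<Longrightarrow> N u \<le> real k \<Longrightarrow> \<not> N (\<lambda>x. C u x - v x) < e0"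
      by (auto simp: T_def)
    have "disjnt (T k) (M.mball v (e0/2))"
      unfolding disjnt_def
    proof (rule equals0I)
      fix y assume "y \<in> T k \<inter> M.mball v (e0/2)"
      then have y: "y \<in> T k" "y \<in> M.mball v (e0/2)" by auto
      then have yX: "y \<in> X" and dy: "N (\<lambda>x. v x - y x) < e0/2" by (auto simp: T_def d_def)
      obtain u where u: "u \<in> X" "N u \<le> real k" "N (\<lambda>x. C u x - y x) < e0/2"
        using y(1) e0(1) by (auto simp: T_def dest!: spec[of _ "e0/2"])
      have "N (\<lambda>x. C u x - v x) \<le> N (\<lambda>x. C u x - y x) + N (\<lambda>x. y x - v x)"
        using N_tri[OF bo_X[OF C u(1)] yX] v by auto
      also have "\<dots> < e0" using u(3) dy N_commute[of y v] by simp
      finally show False using e0(2)[OF u(1,2)] by simp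
    qed
    then show "\<exists>r>0. disjnt (T k) (M.mball v r)" using e0(1) half_gt_zero by blast
  qed
  have UT: "\<Union>(range T) = X"
  proof
    show "\<Union>(range T) \<subseteq> X" by (auto simp: T_def)
    show "X \<subseteq> \<Union>(range T)"
    proof
      fix v :: "'a \<Rightarrow> complex" assume v: "v \<in> X"
      then obtain u where u: "u \<in> X" "C u = v" using surj by blast
      obtain k :: nat where "N u \<le> real k" using real_arch_simple by blast
      then have "v \<in> T k" using u v by (auto simp: T_def)
      then show "v \<in> \<Union>(range T)" by blast
    qed
  qed
  have "\<exists>k. M.mtopology interior_of (T k) \<noteq> {}"
  proof (rule ccontr)
    assume "\<not> ?thesis"
    then have "M.mtopology interior_of \<Union>(range T) = {}"
      using M.metric_Baire_category_alt[OF mc, of "range T"] Tclosed by auto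
    moreover have "M.mtopology interior_of X = X"
      using interior_of_topspace[of M.mtopology] M.topspace_mtopology by simp
    ultimately have "(X :: ('a \<Rightarrow> complex) set) = {}" using UT by simp
    then show False using X_zero by blast
  qed
  then obtain k v0 where v0: "v0 \<in> M.mtopology interior_of (T k)" by blast
  then obtain r where r: "r > 0" "M.mball v0 r \<subseteq> M.mtopology interior_of (T k)"
  proof -
    have "openin M.mtopology (M.mtopology interior_of (T k))" by (rule openin_interior_of)
    then have "\<forall>x. x \<in> M.mtopology interior_of (T k) \<longrightarrow> (\<exists>r>0. M.mball x r \<subseteq> M.mtopology interior_of (T k))"
      unfolding M.openin_mtopology by blast
    then have "\<exists>r>0. M.mball v0 r \<subseteq> M.mtopology interior_of (T k)" using v0 by simp
    then obtain r0 where "r0 > 0" "M.mball v0 r0 \<subseteq> M.mtopology interior_of (T k)" by blast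
    then show ?thesis by (rule that)
  qed
  have v0X: "v0 \<in> X" using v0 interior_of_subset[of M.mtopology "T k"] by (auto simp: T_def)
  have ballT: "M.mball v0 r \<subseteq> T k" using r(2) interior_of_subset[of M.mtopology "T k"] by (rule subset_trans)
  have small: "\<exists>u\<in>X. N u \<le> 2 * real k \<and> N (\<lambda>x. C u x - z x) < e"
    if z: "z \<in> X" "N z < r" and e: "e > 0" for z e
  proof -
    have vz: "(\<lambda>x. v0 x + z x) \<in> X" using X_add[OF v0X z(1)] .
    have "d v0 (\<lambda>x. v0 x + z x) = N z" by (simp add: d_def N_minus)
    then have "(\<lambda>x. v0 x + z x) \<in> T k" using ballT vz v0X z(2) by (auto simp: M.in_mball)
    then obtain u1 where u1: "u1 \<in> X" "N u1 \<le> real k" "N (\<lambda>x. C u1 x - (v0 x + z x)) < e/2"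
      using e by (auto simp: T_def dest!: spec[of _ "e/2"])
    have "v0 \<in> T k" using ballT r(1) v0X by (auto simp: M.in_mball d_def)
    then obtain u2 where u2: "u2 \<in> X" "N u2 \<le> real k" "N (\<lambda>x. C u2 x - v0 x) < e/2"
      using e by (auto simp: T_def dest!: spec[of _ "e/2"])
    define u where "u = (\<lambda>x. u1 x - u2 x)"
    have uX: "u \<in> X" using X_diff u1 u2 by (simp add: u_def)
    have "N u \<le> N u1 + N u2" using N_diff u1 u2 by (simp add: u_def)
    then have nu: "N u \<le> 2 * real k" using u1 u2 by simp
    have "(\<lambda>x. C u x - z x) = (\<lambda>x. (C u1 x - (v0 x + z x)) - (C u2 x - v0 x))"
      using bo_diff[OF C u1(1) u2(1)] by (simp add: u_def algebra_simps)
    moreover have "N (\<lambda>x. (C u1 x - (v0 x + z x)) - (C u2 x - v0 x)) \<le> N (\<lambda>x. C u1 x - (v0 x + z x)) + N (\<lambda>x. C u2 x - v0 x)"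
      by (rule N_diff) (use X_diff bo_X[OF C] u1 u2 vz v0X in auto)
    ultimately have "N (\<lambda>x. C u x - z x) < e" using u1(3) u2(3) by simp
    then show ?thesis using uX nu by blast
  qed
  define K where "K = 4 * real k / r"
  have K0: "K \<ge> 0" using r by (simp add: K_def)
  have "\<exists>u\<in>X. N u \<le> K * N z \<and> N (\<lambda>x. C u x - z x) < e" if z: "z \<in> X" and e: "e > 0" for z e
  proof (cases "N z = 0")
    case True
    then have "z = (\<lambda>x. 0)" using N_eq_0D z by blast
    then show ?thesis using e bo_zero[OF C] by (intro bexI[of _ "\<lambda>x. 0"]) auto
  next
    case False
    then have nz: "N z > 0" using N_nonneg[of z] by simp
    define lm where "lm = r / (2 * N z)"
    have lam: "lm > 0" using nz r by (simp add: lm_def)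
    define z' where "z' = (\<lambda>x. complex_of_real lm * z x)"
    have z'X: "z' \<in> X" using X_scale z by (simp add: z'_def)
    have "N z' = lm * N z" using N_scale[OF z] lam by (simp add: z'_def)
    also have "\<dots> = r / 2" using nz by (simp add: lm_def)
    finally have "N z' < r" using r by simp
    then obtain u' where u': "u' \<in> X" "N u' \<le> 2 * real k" "N (\<lambda>x. C u' x - z' x) < lm * e"
      using small[OF z'X] lam e by (meson mult_pos_pos)
    define u where "u = (\<lambda>x. complex_of_real (1/lm) * u' x)"
    have uX: "u \<in> X" unfolding u_def by (rule X_scale[OF u'(1)])
    have "N u = N u' / lm" unfolding u_def N_scale[OF u'(1)] using lam by (simp add: norm_divide)
    also have "\<dots> \<le> 2 * real k / lm" using u'(2) lam by (simp add: divide_right_mono)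
    also have "\<dots> = K * N z" using nz r by (simp add: K_def lm_def field_simps)
    finally have nu: "N u \<le> K * N z" .
    have "(\<lambda>x. C u x - z x) = (\<lambda>x. complex_of_real (1/lm) * (C u' x - z' x))"
    proof -
      have Cu: "C u = (\<lambda>x. complex_of_real (1/lm) * C u' x)" unfolding u_def by (rule bo_scale[OF C u'(1)])
      have "complex_of_real lm \<noteq> 0" using lam by simp
      then show ?thesis unfolding Cu z'_def by (simp add: fun_eq_iff field_simps)
    qed
    then have "N (\<lambda>x. C u x - z x) = N (\<lambda>x. C u' x - z' x) / lm"
      unfolding \<open>(\<lambda>x. C u x - z x) = _\<close> N_scale[OF X_diff[OF bo_X[OF C u'(1)] z'X]] using lam by (simp add: norm_divide)
    also have "\<dots> < e" using u'(3) lam by (simp add: field_simps)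
    finally show ?thesis using uX nu by blast
  qed
  then show ?thesis using K0 by blast
qed

end

fun itr :: "(('a \<Rightarrow> complex) \<Rightarrow> ('a \<Rightarrow> complex)) \<Rightarrow> (('a \<Rightarrow> complex) \<Rightarrow> nat \<Rightarrow> ('a \<Rightarrow> complex)) \<Rightarrow> ('a \<Rightarrow> complex) \<Rightarrow> nat \<Rightarrow> ('a \<Rightarrow> complex)" where
  "itr C sel y 0 = y"
| "itr C sel y (Suc n) = (\<lambda>x. itr C sel y n x - C (sel (itr C sel y n) n) x)"

lemma geo_eq: "n \<le> m \<Longrightarrow> (\<Sum>i\<in>{n..<m}. (1/2::real)^i) = 2 * (1/2)^n - 2 * (1/2)^m"
proof (induction m rule: dec_induct)
  case base then show ?case by simp
next
  case (step m) then show ?case by simp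
qed

lemma geo_le: "n \<le> m \<Longrightarrow> (\<Sum>i\<in>{n..<m}. (1/2::real)^i) \<le> 2 * (1/2)^n"
  using geo_eq[of n m] by simp

context lpc begin

lemma bounded_inverse:
  fixes C :: "('a \<Rightarrow> complex) \<Rightarrow> ('a \<Rightarrow> complex)"
  assumes C: "bounded_op p C" and surj: "\<And>v. v \<in> X \<Longrightarrow> \<exists>u\<in>X. C u = v"
    and inj: "\<And>u. u \<in> X \<Longrightarrow> C u = (\<lambda>x. 0) \<Longrightarrow> u = (\<lambda>x. 0)"
  shows "\<exists>M. \<forall>u\<in>X. N u \<le> M * N (C u)"
proof -
  obtain K where K0: "K \<ge> 0" and K: "\<And>z e. z \<in> X \<Longrightarrow> e > 0 \<Longrightarrow> \<exists>u\<in>X. N u \<le> K * N z \<and> N (\<lambda>x. C u x - z x) < e"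
    using approx_solve[OF C surj] by blast
  obtain B where B0: "B \<ge> 0" and B: "\<And>u. u \<in> X \<Longrightarrow> N (C u) \<le> B * N u"
    using bo_bound[OF C] by blast
  have key: "\<exists>s\<in>X. C s = y \<and> N s \<le> 2 * K * (N y + \<delta>)" if y: "y \<in> X" and dl: "\<delta> > 0" for y \<delta>
  proof -
    define a where "a = N y + \<delta>"
    have a: "a > 0" using dl N_nonneg[of y] by (simp add: a_def)
    have "\<forall>z n. \<exists>u. z \<in> X \<longrightarrow> u \<in> X \<and> N u \<le> K * N z \<and> N (\<lambda>x. C u x - z x) < a * (1/2)^Suc n"
      using K a by (metis zero_less_power zero_less_divide_1_iff zero_less_numeral mult_pos_pos)
    then obtain sel where sel: "\<And>z n. z \<in> X \<Longrightarrow> sel z n \<in> X \<and> N (sel z n) \<le> K * N z \<and> N (\<lambda>x. C (sel z n) x - z x) < a * (1/2)^Suc n"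
      by metis
    define ys where "ys n = itr C sel y n" for n
    define us where "us n = sel (ys n) n" for n
    have ys_Suc: "ys (Suc n) = (\<lambda>x. ys n x - C (us n) x)" for n by (simp add: ys_def us_def)
    have ysX: "ys n \<in> X \<and> N (ys n) \<le> a * (1/2)^n" for n
    proof (induction n)
      case 0 then show ?case using y dl by (simp add: ys_def a_def)
    next
      case (Suc n)
      have u: "us n \<in> X" "N (\<lambda>x. C (us n) x - ys n x) < a * (1/2)^Suc n"
        using sel[of "ys n" n] Suc by (auto simp: us_def)
      have "ys (Suc n) \<in> X" unfolding ys_Suc using X_diff Suc bo_X[OF C u(1)] by blast
      moreover have "N (ys (Suc n)) = N (\<lambda>x. C (us n) x - ys n x)" unfolding ys_Suc by (rule N_commute)
      ultimately show ?case using u(2) by simp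
    qed
    have usX: "us n \<in> X" "N (us n) \<le> K * a * (1/2)^n" for n
    proof -
      show "us n \<in> X" using sel[of "ys n" n] ysX by (simp add: us_def)
      have "N (us n) \<le> K * N (ys n)" using sel[of "ys n" n] ysX by (simp add: us_def)
      also have "\<dots> \<le> K * (a * (1/2)^n)" using ysX K0 by (intro mult_left_mono) auto
      finally show "N (us n) \<le> K * a * (1/2)^n" by simp
    qed
    define ps where "ps n = (\<lambda>x. \<Sum>i\<in>{..<n}. us i x)" for n
    have ps_sum: "\<And>I. finite I \<Longrightarrow> (\<lambda>x. \<Sum>i\<in>I. us i x) \<in> X \<and> N (\<lambda>x. \<Sum>i\<in>I. us i x) \<le> (\<Sum>i\<in>I. K * a * (1/2)^i)"
    proof -
      fix I :: "nat set" assume I: "finite I"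
      have "(\<lambda>x. \<Sum>i\<in>I. 1 * us i x) \<in> X \<and> N (\<lambda>x. \<Sum>i\<in>I. 1 * us i x) \<le> (\<Sum>i\<in>I. norm (1::complex) * N (us i))"
        by (rule X_sum[OF I]) (use usX in auto)
      moreover have "(\<Sum>i\<in>I. norm (1::complex) * N (us i)) \<le> (\<Sum>i\<in>I. K * a * (1/2)^i)"
        using usX by (intro sum_mono) simp
      ultimately show "(\<lambda>x. \<Sum>i\<in>I. us i x) \<in> X \<and> N (\<lambda>x. \<Sum>i\<in>I. us i x) \<le> (\<Sum>i\<in>I. K * a * (1/2)^i)"
        by simp
    qed
    have psX: "ps n \<in> X" for n using ps_sum[of "{..<n}"] by (simp add: ps_def)
    have Nps: "N (ps n) \<le> 2 * K * a" for n
    proof -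
      have "N (ps n) \<le> (\<Sum>i\<in>{..<n}. K * a * (1/2)^i)" using ps_sum[of "{..<n}"] by (simp add: ps_def)
      also have "\<dots> = K * a * (\<Sum>i\<in>{0..<n}. (1/2)^i)" by (simp add: sum_distrib_left lessThan_atLeast0)
      also have "\<dots> \<le> K * a * 2" using geo_le[of 0 n] K0 a by (intro mult_left_mono) auto
      finally show ?thesis by simp
    qed
    have Cps: "C (ps n) = (\<lambda>x. y x - ys n x)" for n
    proof (induction n)
      case 0 then show ?case using bo_zero[OF C] by (simp add: ps_def ys_def)
    next
      case (Suc n)
      have "ps (Suc n) = (\<lambda>x. ps n x + us n x)" by (simp add: ps_def)
      then have "C (ps (Suc n)) = (\<lambda>x. C (ps n) x + C (us n) x)" using bo_add[OF C psX usX(1)] by simp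
      then show ?case using Suc by (simp add: ys_Suc fun_eq_iff algebra_simps)
    qed
    have psdiff: "N (\<lambda>x. ps k x - ps l x) \<le> 2 * K * a * (1/2)^l" if "l \<le> k" for k l
    proof -
      have "(\<lambda>x. ps k x - ps l x) = (\<lambda>x. \<Sum>i\<in>{l..<k}. us i x)"
        using that by (simp add: ps_def lessThan_atLeast0 sum_diff_nat_ivl)
      then have "N (\<lambda>x. ps k x - ps l x) \<le> (\<Sum>i\<in>{l..<k}. K * a * (1/2)^i)" using ps_sum[of "{l..<k}"] by simp
      also have "\<dots> = K * a * (\<Sum>i\<in>{l..<k}. (1/2)^i)" by (simp add: sum_distrib_left)
      also have "\<dots> \<le> K * a * (2 * (1/2)^l)" using geo_le[OF that] K0 a by (intro mult_left_mono) auto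
      finally show ?thesis by simp
    qed
    have small_pow: "\<exists>L. \<forall>l\<ge>L. c * (1/2::real)^l < e" if ec: "e > 0" "c \<ge> 0" for c e
    proof -
      obtain L where L: "(1/2::real)^L < e / (c + 1)" using real_arch_pow_inv[of "e / (c+1)" "1/2"] ec by auto
      have "c * (1/2)^l < e" if "l \<ge> L" for l
      proof -
        have "(1/2::real)^l \<le> (1/2)^L" using that by (intro power_decreasing) auto
        then have "(1/2::real)^l \<le> e / (c+1)" using L by linarith
        then have "c * (1/2)^l \<le> c * (e / (c+1))" using ec by (intro mult_left_mono) auto
        also have "\<dots> < e" using ec by (simp add: field_simps)
        finally show ?thesis .
      qed
      then show ?thesis by blast
    qed
    have cau: "\<exists>L. \<forall>k\<ge>L. \<forall>l\<ge>L. N (\<lambda>x. ps k x - ps l x) < e" if e: "e > 0" for e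
    proof -
      obtain L where L: "\<forall>l\<ge>L. 2 * K * a * (1/2)^l < e" using small_pow[OF e, of "2 * K * a"] K0 a by auto
      have "N (\<lambda>x. ps k x - ps l x) < e" if "k \<ge> L" "l \<ge> L" for k l
      proof (cases "l \<le> k")
        case True then show ?thesis using psdiff[OF True] L that by (meson order_le_less_trans)
      next
        case False
        then have "N (\<lambda>x. ps l x - ps k x) < e" using psdiff[of k l] L that by (meson order_le_less_trans nat_le_linear)
        then show ?thesis using N_commute[of "ps k" "ps l"] by simp
      qed
      then show ?thesis by blast
    qed
    obtain s where sX: "s \<in> X" and slim: "\<forall>e>0. \<exists>L. \<forall>k\<ge>L. N (\<lambda>x. ps k x - s x) \<le> e"
      using X_complete[of ps, OF psX cau] by blast
    have Cs_close: "N (\<lambda>x. C s x - y x) \<le> e" if e: "e > 0" for e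
    proof -
      obtain L1 where L1: "\<forall>k\<ge>L1. N (\<lambda>x. ps k x - s x) \<le> e / (2 * (B + 1))"
        using slim e B0 by (metis add_nonneg_pos divide_pos_pos mult_pos_pos zero_less_numeral zero_less_one)
      obtain L2 where L2: "\<forall>l\<ge>L2. a * (1/2)^l < e / 2" using small_pow[of "e/2" a] e a by auto
      define k where "k = max L1 L2"
      have k1: "N (\<lambda>x. ps k x - s x) \<le> e / (2 * (B + 1))" using L1 by (simp add: k_def)
      have k2: "a * (1/2)^k < e / 2" using L2 by (simp add: k_def)
      have "N (\<lambda>x. C s x - y x) \<le> N (\<lambda>x. C s x - C (ps k) x) + N (\<lambda>x. C (ps k) x - y x)"
        by (rule N_tri) (use bo_X[OF C] sX psX y in auto)
      also have "N (\<lambda>x. C s x - C (ps k) x) \<le> B * N (\<lambda>x. s x - ps k x)"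
        using B[OF X_diff[OF sX psX]] bo_diff[OF C sX psX] by simp
      also have "N (\<lambda>x. s x - ps k x) = N (\<lambda>x. ps k x - s x)" by (rule N_commute)
      also have "N (\<lambda>x. C (ps k) x - y x) = N (ys k)" by (simp add: Cps N_minus)
      also have "N (ys k) \<le> a * (1/2)^k" using ysX by simp
      finally have "N (\<lambda>x. C s x - y x) \<le> B * N (\<lambda>x. ps k x - s x) + a * (1/2)^k" by simp
      moreover have "B * N (\<lambda>x. ps k x - s x) \<le> B * (e / (2 * (B + 1)))" using k1 B0 by (intro mult_left_mono) auto
      moreover have "B * (e / (2 * (B + 1))) \<le> e / 2" using B0 e by (simp add: field_simps)
      ultimately show ?thesis using k2 by linarith
    qed
    have "N (\<lambda>x. C s x - y x) \<le> 0"
      using Cs_close by (meson dense not_le)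
    then have "N (\<lambda>x. C s x - y x) = 0" using N_nonneg by (meson antisym)
    then have "(\<lambda>x. C s x - y x) = (\<lambda>x. 0)" using N_eq_0D X_diff[OF bo_X[OF C sX] y] by blast
    then have Cs: "C s = y" by (simp add: fun_eq_iff)
    have "N s \<le> 2 * K * a + e" if e: "e > 0" for e
    proof -
      obtain k where k: "N (\<lambda>x. ps k x - s x) \<le> e" using slim e by blast
      have "s = (\<lambda>x. ps k x - (ps k x - s x))" by simp
      then have "N s \<le> N (ps k) + N (\<lambda>x. ps k x - s x)" using N_diff[OF psX X_diff[OF psX sX], of k k] by simp
      then show ?thesis using Nps[of k] k by simp
    qed
    then have "N s \<le> 2 * K * a" using field_le_epsilon by blast
    then show ?thesis using sX Cs by (auto simp: a_def)
  qed
  have "N u \<le> 2 * K * N (C u)" if u: "u \<in> X" for u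
  proof (rule field_le_epsilon)
    fix e :: real assume e: "e > 0"
    define \<delta> where "\<delta> = e / (2 * K + 1)"
    have dl: "\<delta> > 0" using e K0 by (simp add: \<delta>_def)
    obtain s where s: "s \<in> X" "C s = C u" "N s \<le> 2 * K * (N (C u) + \<delta>)"
      using key[OF bo_X[OF C u] dl] by blast
    have "C (\<lambda>x. u x - s x) = (\<lambda>x. 0)" using bo_diff[OF C u s(1)] s(2) by simp
    then have "(\<lambda>x. u x - s x) = (\<lambda>x. 0)" using inj X_diff[OF u s(1)] by blast
    then have "u = s" by (simp add: fun_eq_iff)
    moreover have "2 * K * \<delta> \<le> e" using K0 e by (simp add: \<delta>_def field_simps)
    ultimately show "N u \<le> 2 * K * N (C u) + e" using s(3) by (simp add: algebra_simps)
  qed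
  then show ?thesis by blast
qed

end

lemma cspan_zero: "(\<lambda>x. 0) \<in> cspan_fun F"
  unfolding cspan_fun_def by (rule CollectI, rule exI[of _ "{}"]) auto

context lpc begin

lemma inv_fred:
  fixes C :: "('a \<Rightarrow> complex) \<Rightarrow> ('a \<Rightarrow> complex)"
  assumes "invertible_op p C" shows "fredholm p C"
proof -
  obtain B where C: "bounded_op p C" and B: "bounded_op p B" and BC: "\<And>u. u \<in> X \<Longrightarrow> B (C u) = u \<and> C (B u) = u"
    using assms by (auto simp: invertible_op_def)
  have ker: "{u \<in> X. C u = (\<lambda>x. 0)} \<subseteq> cspan_fun {}"
  proof
    fix u :: "'a \<Rightarrow> complex" assume "u \<in> {u \<in> X. C u = (\<lambda>x. 0)}"
    then have u: "u \<in> X" "C u = (\<lambda>x. 0)" by auto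
    then have "u = B (\<lambda>x. 0)" using BC by metis
    then have "u = (\<lambda>x. 0)" using bo_zero[OF B] by simp
    then show "u \<in> cspan_fun {}" using cspan_zero by simp
  qed
  have cl: "\<forall>v\<in>X. (\<forall>e>0. \<exists>u\<in>X. N (\<lambda>x. C u x - v x) < e) \<longrightarrow> (\<exists>u\<in>X. C u = v)"
    using BC bo_X[OF B] by blast
  have cok: "\<forall>v\<in>X. \<exists>u\<in>X. (\<lambda>x. v x - C u x) \<in> cspan_fun {}"
  proof
    fix v :: "'a \<Rightarrow> complex" assume v: "v \<in> X"
    then have "B v \<in> X" "(\<lambda>x. v x - C (B v) x) = (\<lambda>x. 0)" using BC bo_X[OF B] by auto
    then show "\<exists>u\<in>X. (\<lambda>x. v x - C u x) \<in> cspan_fun {}" using cspan_zero by metis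
  qed
  show ?thesis unfolding fredholm_def using C ker cl cok by blast
qed

end

context lpa begin

lemma fred_inv:
  fixes C :: "('a \<Rightarrow> complex) \<Rightarrow> ('a \<Rightarrow> complex)"
  assumes fr: "fredholm p C" and per: "\<And>a u. u \<in> X \<Longrightarrow> shift act a (C u) = C (shift act a u)"
  shows "invertible_op p C"
proof -
  have C: "bounded_op p C" using fr by (simp add: fredholm_def)
  obtain F1 where F1: "finite F1" "{u \<in> X. C u = (\<lambda>x. 0)} \<subseteq> cspan_fun F1"
    using fr by (auto simp: fredholm_def)
  have cl: "\<And>v. v \<in> X \<Longrightarrow> (\<forall>e>0. \<exists>u\<in>X. N (\<lambda>x. C u x - v x) < e) \<Longrightarrow> \<exists>u\<in>X. C u = v"
    using fr by (auto simp: fredholm_def)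
  obtain F2 where F2: "finite F2" "\<And>v. v \<in> X \<Longrightarrow> \<exists>u\<in>X. (\<lambda>x. v x - C u x) \<in> cspan_fun F2"
    using fr by (auto simp: fredholm_def)
  have inj: "u = (\<lambda>x. 0)" if u: "u \<in> X" "C u = (\<lambda>x. 0)" for u
  proof (rule kernel_trivial[OF F1(1) u(1)])
    fix a
    have "C (shift act a u) = shift act a (C u)" by (rule per[OF u(1), symmetric])
    also have "\<dots> = (\<lambda>x. 0)" using u by (simp add: shift_def)
    finally show "shift act a u \<in> cspan_fun F1" using F1(2) X_shift[OF u(1)] by blast
  qed
  have inj2: "u = v" if "u \<in> X" "v \<in> X" "C u = C v" for u v
  proof -
    have "C (\<lambda>x. u x - v x) = (\<lambda>x. 0)" using bo_diff[OF C that(1,2)] that(3) by simp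
    then have "(\<lambda>x. u x - v x) = (\<lambda>x. 0)" using inj X_diff that by blast
    then show ?thesis by (simp add: fun_eq_iff)
  qed
  define R where "R = C ` X"
  have surj: "\<exists>u\<in>X. C u = v" if v: "v \<in> X" for v
  proof -
    have "v \<in> R"
    proof (rule cokernel_trivial[OF F2(1), of R])
      show "R \<subseteq> X" using bo_X[OF C] by (auto simp: R_def)
      show "(\<lambda>x. 0) \<in> R" unfolding R_def by (rule rev_image_eqI[OF X_zero]) (simp add: bo_zero[OF C])
      show "(\<lambda>x. u x + w x) \<in> R" if uw: "u \<in> R" "w \<in> R" for u w
      proof -
        obtain u' w' where "u' \<in> X" "w' \<in> X" "u = C u'" "w = C w'" using uw by (auto simp: R_def)
        then show ?thesis unfolding R_def by (intro rev_image_eqI[OF X_add[of u' w']]) (simp_all add: bo_add[OF C])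
      qed
      show "(\<lambda>x. c * u x) \<in> R" if uR: "u \<in> R" for u c
      proof -
        obtain u' where "u' \<in> X" "u = C u'" using uR by (auto simp: R_def)
        then show ?thesis unfolding R_def by (intro rev_image_eqI[OF X_scale[of u' c]]) (simp_all add: bo_scale[OF C])
      qed
      show "shift act a u \<in> R" if uR: "u \<in> R" for u a
      proof -
        obtain u' where "u' \<in> X" "u = C u'" using uR by (auto simp: R_def)
        then show ?thesis unfolding R_def by (intro rev_image_eqI[OF X_shift[of u' a]]) (simp_all add: per)
      qed
      show "w \<in> R" if "w \<in> X" "\<forall>e>0. \<exists>r\<in>R. N (\<lambda>x. r x - w x) < e" for w
      proof -
        have "\<forall>e>0. \<exists>u\<in>X. N (\<lambda>x. C u x - w x) < e" using that(2) by (auto simp: R_def)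
        then show ?thesis using cl[OF that(1)] by (auto simp: R_def)
      qed
      show "\<exists>r\<in>R. (\<lambda>x. w x - r x) \<in> cspan_fun F2" if "w \<in> X" for w
        using F2(2)[OF that] by (auto simp: R_def)
      show "v \<in> X" by fact
    qed
    then show ?thesis by (auto simp: R_def)
  qed
  obtain M where M: "\<And>u. u \<in> X \<Longrightarrow> N u \<le> M * N (C u)"
    using bounded_inverse[OF C surj inj] by blast
  define Bop where "Bop v = (SOME u. u \<in> X \<and> C u = v)" for v
  have Bop: "Bop v \<in> X \<and> C (Bop v) = v" if "v \<in> X" for v
  proof -
    have "\<exists>u. u \<in> X \<and> C u = v" using surj[OF that] by blast
    from someI_ex[OF this] show ?thesis by (simp add: Bop_def)
  qed
  have "bounded_op p Bop"
    unfolding bounded_op_def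
  proof (intro conjI ballI allI)
    show "Bop u \<in> X" if "u \<in> X" for u using Bop that by blast
    show "Bop (\<lambda>x. u x + v x) = (\<lambda>x. Bop u x + Bop v x)" if "u \<in> X" "v \<in> X" for u v
    proof (rule inj2)
      show "Bop (\<lambda>x. u x + v x) \<in> X" using Bop X_add that by blast
      show "(\<lambda>x. Bop u x + Bop v x) \<in> X" using Bop X_add that by blast
      show "C (Bop (\<lambda>x. u x + v x)) = C (\<lambda>x. Bop u x + Bop v x)"
        using Bop[OF X_add[OF that]] Bop[OF that(1)] Bop[OF that(2)] bo_add[OF C] by simp
    qed
    show "Bop (\<lambda>x. c * u x) = (\<lambda>x. c * Bop u x)" if "u \<in> X" for u c
    proof (rule inj2)
      show "Bop (\<lambda>x. c * u x) \<in> X" using Bop X_scale that by blast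
      show "(\<lambda>x. c * Bop u x) \<in> X" using Bop X_scale that by blast
      show "C (Bop (\<lambda>x. c * u x)) = C (\<lambda>x. c * Bop u x)"
        using Bop[OF X_scale[OF that]] Bop[OF that] bo_scale[OF C] by simp
    qed
    show "\<exists>K. \<forall>u\<in>X. N (Bop u) \<le> K * N u"
    proof (intro exI ballI)
      fix u :: "'a \<Rightarrow> complex" assume "u \<in> X"
      then show "N (Bop u) \<le> M * N u" using M[of "Bop u"] Bop by simp
    qed
  qed
  moreover have "\<forall>u\<in>X. Bop (C u) = u \<and> C (Bop u) = u"
    using Bop inj2 bo_X[OF C] by blast
  ultimately show ?thesis unfolding invertible_op_def using C by blast
qed

end

theorem proposition4p1:
  fixes \<rho> :: "'a \<Rightarrow> 'a \<Rightarrow> real"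
    and act :: "int ^ 'n \<Rightarrow> 'a \<Rightarrow> 'a"
    and p :: real
    and A :: "('a \<Rightarrow> complex) \<Rightarrow> ('a \<Rightarrow> complex)"
  assumes "periodic_space \<rho> act"
    and "1 < p"
    and "Ap_class p \<rho> A"
    and "\<forall>\<alpha>. \<forall>u \<in> lp_space p. shift act \<alpha> (A u) = A (shift act \<alpha> u)"
  shows "ess_spectrum_op p A = spectrum_op p A"
proof -
  have L: "lpa p act"
    using assms(1,2) unfolding lpa_def lpa_axioms_def lpc_def periodic_space_def by auto
  have per: "shift act a ((\<lambda>u x. A u x - z * u x) u) = (\<lambda>u x. A u x - z * u x) (shift act a u)"
    if "u \<in> lp_space p" for a u z
  proof -
    have "shift act a (A u) = A (shift act a u)" using assms(4) that by blast
    then show ?thesis by (simp add: shift_def fun_eq_iff)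
  qed
  show ?thesis
  proof
    have Lc: "lpc p" using L by (simp add: lpa_def)
    show "ess_spectrum_op p A \<subseteq> spectrum_op p A"
    proof
      fix z assume "z \<in> ess_spectrum_op p A"
      then have "\<not> fredholm p (\<lambda>u x. A u x - z * u x)" by (simp add: ess_spectrum_op_def)
      then have "\<not> invertible_op p (\<lambda>u x. A u x - z * u x)" using lpc.inv_fred[OF Lc] by metis
      then show "z \<in> spectrum_op p A" by (simp add: spectrum_op_def)
    qed
    show "spectrum_op p A \<subseteq> ess_spectrum_op p A"
    proof
      fix z assume "z \<in> spectrum_op p A"
      then have ni: "\<not> invertible_op p (\<lambda>u x. A u x - z * u x)" by (simp add: spectrum_op_def)
      have "\<not> fredholm p (\<lambda>u x. A u x - z * u x)"
      proof
        assume "fredholm p (\<lambda>u x. A u x - z * u x)"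
        from lpa.fred_inv[OF L this per] ni show False by blast
      qed
      then show "z \<in> ess_spectrum_op p A" by (simp add: ess_spectrum_op_def)
    qed
  qed
qed

end
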